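(* For an essentially profinite class $\mathcal{F}$ of simple graphs, the following are equivalent: (1) $\mathcal{F}$ is homomorphism distinguishing closed; (2) for every graph $K$, if $\vec{K}\in\mathrm{span}\{\vec{F}\in\mathbb{R}^{\Gamma(\mathcal{F}_K\cup\{K\})}\mid F\in\mathcal{F}_K\}$ then $K\in\mathcal{F}$; (3) $\mathcal{F}_K$ is homomorphism distinguishing closed for every graph $K$.
   Context: All graphs are finite, undirected, without multiple edges; simple means without loops. $\hom(F,G)$ counts homomorphisms; $G\equiv_{\mathcal{F}}H$ means $\hom(F,G)=\hom(F,H)$ for all $F\in\mathcal{F}$; $\mathrm{cl}(\mathcal{F})$ is the class of simple graphs $K$ such that for all simple $G,H$, $G\equiv_{\mathcal{F}}H$ implies $\hom(K,G)=\hom(K,H)$; $\mathcal{F}$ is homomorphism distinguishing closed if $\mathrm{cl}(\mathcal{F})=\mathcal{F}$. $\Gamma(F)$ is the set of isomorphism types of connected components of $F$, $\Gamma(\mathcal{F})=\bigcup_{F\in\mathcal{F}}\Gamma(F)$. $\mathcal{F}_K=\{F\in\mathcal{F}\mid\hom(F,K)>0\}$. $\mathcal{F}$ is essentially finite if $\Gamma(\mathcal{F})$ is finite, essentially profinite if $\mathcal{F}_K$ is essentially finite for all graphs $K$. For a finite set $\mathcal{C}$ of connected graphs and a graph $F$ with $\Gamma(F)\subseteq\mathcal{C}$, $\vec F\in\mathbb{R}^{\mathcal{C}}$ is the vector whose $C$-entry is the number of connected components of $F$ isomorphic to $C$. *)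

theory Defs
  imports Complex_Main "HOL-Library.FuncSet"
begin

text \<open>A (finite, undirected, possibly looped, no multi-edges) graph with vertices
  drawn from nat: a vertex set and a symmetric edge relation on it.
  A loop at v is the pair (v,v).\<close>
type_synonym graph = "nat set \<times> (nat \<times> nat) set"

definition verts :: "graph \<Rightarrow> nat set" where "verts G = fst G"
definition edges :: "graph \<Rightarrow> (nat \<times> nat) set" where "edges G = snd G"

definition is_graph :: "graph \<Rightarrow> bool" where
  "is_graph G \<longleftrightarrow> finite (verts G) \<and> edges G \<subseteq> verts G \<times> verts G \<and> sym (edges G)"

definition simple_graph :: "graph \<Rightarrow> bool" where
  "simple_graph G \<longleftrightarrow> is_graph G \<and> (\<forall>v. (v, v) \<notin> edges G)"

definition homs :: "graph \<Rightarrow> graph \<Rightarrow> (nat \<Rightarrow> nat) set" where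
  "homs F G = {h \<in> verts F \<rightarrow>\<^sub>E verts G. \<forall>(u, v) \<in> edges F. (h u, h v) \<in> edges G}"

definition hom :: "graph \<Rightarrow> graph \<Rightarrow> nat" where
  "hom F G = card (homs F G)"

definition iso :: "graph \<Rightarrow> graph \<Rightarrow> bool" where
  "iso F G \<longleftrightarrow> (\<exists>f. bij_betw f (verts F) (verts G) \<and>
     (\<forall>u\<in>verts F. \<forall>v\<in>verts F. (u, v) \<in> edges F \<longleftrightarrow> (f u, f v) \<in> edges G))"

definition iso_type :: "graph \<Rightarrow> graph set" where
  "iso_type G = {H. is_graph H \<and> iso H G}"

definition iso_closed :: "graph set \<Rightarrow> bool" where
  "iso_closed \<F> \<longleftrightarrow> (\<forall>F\<in>\<F>. \<forall>G. is_graph G \<and> iso G F \<longrightarrow> G \<in> \<F>)"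

definition induced :: "graph \<Rightarrow> nat set \<Rightarrow> graph" where
  "induced G S = (S, edges G \<inter> (S \<times> S))"

definition component_sets :: "graph \<Rightarrow> nat set set" where
  "component_sets G = (\<lambda>v. (edges G)\<^sup>* `` {v}) ` verts G"

definition components :: "graph \<Rightarrow> graph set" where
  "components G = induced G ` component_sets G"

definition Gamma :: "graph \<Rightarrow> graph set set" where
  "Gamma G = iso_type ` components G"

definition Gamma_class :: "graph set \<Rightarrow> graph set set" where
  "Gamma_class \<F> = (\<Union>F\<in>\<F>. Gamma F)"

definition comp_vec :: "graph \<Rightarrow> graph set \<Rightarrow> real" where
  "comp_vec G t = real (card {S \<in> component_sets G. iso_type (induced G S) = t})"

text \<open>v lies in the real span of the vectors in V, as vectors in R^C
  (only the coordinates in C are compared).\<close>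
definition in_span_on :: "'c set \<Rightarrow> ('c \<Rightarrow> real) set \<Rightarrow> ('c \<Rightarrow> real) \<Rightarrow> bool" where
  "in_span_on C V v \<longleftrightarrow> (\<exists>S c. finite S \<and> S \<subseteq> V \<and> (\<forall>t\<in>C. v t = (\<Sum>w\<in>S. c w * w t)))"

definition hom_equiv :: "graph set \<Rightarrow> graph \<Rightarrow> graph \<Rightarrow> bool" where
  "hom_equiv \<F> G H \<longleftrightarrow> (\<forall>F\<in>\<F>. hom F G = hom F H)"

definition hd_cl :: "graph set \<Rightarrow> graph set" where
  "hd_cl \<F> = {K. simple_graph K \<and> (\<forall>G H. simple_graph G \<longrightarrow> simple_graph H \<longrightarrow>
      hom_equiv \<F> G H \<longrightarrow> hom K G = hom K H)}"

definition hd_closed :: "graph set \<Rightarrow> bool" where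
  "hd_closed \<F> \<longleftrightarrow> hd_cl \<F> = \<F>"

definition restrict_to :: "graph set \<Rightarrow> graph \<Rightarrow> graph set" where
  "restrict_to \<F> K = {F \<in> \<F>. hom F K > 0}"

definition ess_finite :: "graph set \<Rightarrow> bool" where
  "ess_finite \<F> \<longleftrightarrow> finite (Gamma_class \<F>)"

definition ess_profinite :: "graph set \<Rightarrow> bool" where
  "ess_profinite \<F> \<longleftrightarrow> (\<forall>K. is_graph K \<longrightarrow> ess_finite (restrict_to \<F> K))"

end

theory Submission
  imports Defs "HOL-Library.Nat_Bijection" "HOL-Library.Function_Algebras"
begin

lemma homs_sub: "homs F G \<subseteq> (verts F \<rightarrow>\<^sub>E verts G)"
  unfolding homs_def by auto

lemma homs_finite: "finite (verts F) \<Longrightarrow> finite (verts G) \<Longrightarrow> finite (homs F G)"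
  by (rule finite_subset[OF homs_sub]) (auto intro: finite_PiE)

lemma is_graph_fin: "is_graph G \<Longrightarrow> finite (verts G)"
  by (simp add: is_graph_def)

lemma is_graph_edge: "is_graph G \<Longrightarrow> (u,v) \<in> edges G \<Longrightarrow> u \<in> verts G \<and> v \<in> verts G"
  by (auto simp add: is_graph_def)

lemma is_graph_sym: "is_graph G \<Longrightarrow> (u,v) \<in> edges G \<Longrightarrow> (v,u) \<in> edges G"
  by (auto simp add: is_graph_def sym_def)

lemma iso_refl: "iso G G"
  unfolding iso_def by (rule exI[of _ id]) auto

lemma iso_sym: assumes "iso F G" shows "iso G F"
proof -
  from assms obtain f where f: "bij_betw f (verts F) (verts G)"
    and e: "\<forall>u\<in>verts F. \<forall>v\<in>verts F. (u, v) \<in> edges F \<longleftrightarrow> (f u, f v) \<in> edges G"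
    unfolding iso_def by blast
  let ?g = "inv_into (verts F) f"
  have g: "bij_betw ?g (verts G) (verts F)" using f by (rule bij_betw_inv_into)
  have "\<forall>u\<in>verts G. \<forall>v\<in>verts G. (u, v) \<in> edges G \<longleftrightarrow> (?g u, ?g v) \<in> edges F"
  proof (intro ballI)
    fix u v assume u: "u \<in> verts G" and v: "v \<in> verts G"
    have "f (?g u) = u" "f (?g v) = v" using f u v by (auto simp: bij_betw_inv_into_right)
    moreover have "?g u \<in> verts F" "?g v \<in> verts F" using g u v by (auto dest: bij_betwE)
    ultimately show "(u, v) \<in> edges G \<longleftrightarrow> (?g u, ?g v) \<in> edges F" using e by metis
  qed
  with g show ?thesis unfolding iso_def by blast
qed

lemma iso_trans: assumes "iso F G" "iso G H" shows "iso F H"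
proof -
  from assms obtain f g where f: "bij_betw f (verts F) (verts G)"
    and e: "\<forall>u\<in>verts F. \<forall>v\<in>verts F. (u, v) \<in> edges F \<longleftrightarrow> (f u, f v) \<in> edges G"
    and g: "bij_betw g (verts G) (verts H)"
    and e2: "\<forall>u\<in>verts G. \<forall>v\<in>verts G. (u, v) \<in> edges G \<longleftrightarrow> (g u, g v) \<in> edges H"
    unfolding iso_def by blast
  have "bij_betw (g \<circ> f) (verts F) (verts H)" using f g by (rule bij_betw_trans)
  moreover have "\<forall>u\<in>verts F. \<forall>v\<in>verts F. (u, v) \<in> edges F \<longleftrightarrow> ((g \<circ> f) u, (g \<circ> f) v) \<in> edges H"
    using e e2 f by (auto dest: bij_betwE)
  ultimately show ?thesis unfolding iso_def by blast
qed

lemma hom_le_iso: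
  assumes "iso A B" "is_graph A" "is_graph B" "is_graph G"
  shows "hom B G \<le> hom A G"
proof -
  from assms obtain f where f: "bij_betw f (verts A) (verts B)"
    and e: "\<forall>u\<in>verts A. \<forall>v\<in>verts A. (u, v) \<in> edges A \<longleftrightarrow> (f u, f v) \<in> edges B"
    unfolding iso_def by blast
  let ?P = "\<lambda>h. restrict (h \<circ> f) (verts A)"
  have into: "?P ` homs B G \<subseteq> homs A G"
  proof
    fix x assume "x \<in> ?P ` homs B G"
    then obtain h where h: "h \<in> homs B G" and x: "x = ?P h" by blast
    have fv: "\<And>a. a \<in> verts A \<Longrightarrow> f a \<in> verts B" using f by (auto dest: bij_betwE)
    have m: "restrict (h \<circ> f) (verts A) \<in> verts A \<rightarrow>\<^sub>E verts G" using h fv unfolding homs_def by auto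
    have "\<forall>(u,v)\<in>edges A. (restrict (h \<circ> f) (verts A) u, restrict (h \<circ> f) (verts A) v) \<in> edges G"
    proof (clarify)
      fix u v assume uv: "(u,v) \<in> edges A"
      then have uA: "u \<in> verts A" "v \<in> verts A" using assms(2) by (auto dest: is_graph_edge)
      then have "(f u, f v) \<in> edges B" using e uv by blast
      then show "(restrict (h \<circ> f) (verts A) u, restrict (h \<circ> f) (verts A) v) \<in> edges G"
        using h uA unfolding homs_def by auto
    qed
    with m show "x \<in> homs A G" unfolding x homs_def by blast
  qed
  have inj: "inj_on ?P (homs B G)"
  proof (rule inj_onI)
    fix h1 h2 assume h1: "h1 \<in> homs B G" and h2: "h2 \<in> homs B G" and eq: "?P h1 = ?P h2"
    show "h1 = h2"
    proof
      fix x show "h1 x = h2 x"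
      proof (cases "x \<in> verts B")
        case True
        then obtain a where a: "a \<in> verts A" "x = f a" using f by (auto simp: bij_betw_def)
        then show ?thesis using fun_cong[OF eq, of a] by simp
      next
        case False
        then show ?thesis using h1 h2 unfolding homs_def by (auto simp: PiE_def extensional_def)
      qed
    qed
  qed
  have "finite (homs A G)" using assms by (auto intro: homs_finite is_graph_fin)
  then show ?thesis unfolding hom_def using card_inj_on_le[OF inj into] by blast
qed

lemma hom_iso:
  assumes "iso A B" "is_graph A" "is_graph B" "is_graph G"
  shows "hom A G = hom B G"
  using hom_le_iso[OF assms] hom_le_iso[OF iso_sym[OF assms(1)] assms(3,2,4)] by simp

lemma hom_pos_iff: "is_graph A \<Longrightarrow> is_graph G \<Longrightarrow> hom A G > 0 \<longleftrightarrow> homs A G \<noteq> {}"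
  unfolding hom_def by (simp add: card_gt_0_iff homs_finite is_graph_fin)

lemma hom_comp_pos:
  assumes "is_graph A" "is_graph B" "is_graph C" "hom A B > 0" "hom B C > 0"
  shows "hom A C > 0"
proof -
  obtain h1 where h1: "h1 \<in> homs A B" using assms hom_pos_iff by blast
  obtain h2 where h2: "h2 \<in> homs B C" using assms hom_pos_iff by blast
  have "restrict (h2 \<circ> h1) (verts A) \<in> homs A C"
    using h1 h2 assms(1) unfolding homs_def
    apply (auto dest: is_graph_edge)
     apply (fastforce dest: is_graph_edge)
    apply (fastforce dest: is_graph_edge)
    done
  then show ?thesis using hom_pos_iff assms by blast
qed

lemma simple_iso: assumes "iso A B" "simple_graph B" "is_graph A" shows "simple_graph A"
proof -
  from assms obtain f where f: "bij_betw f (verts A) (verts B)"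
    and e: "\<forall>u\<in>verts A. \<forall>v\<in>verts A. (u, v) \<in> edges A \<longleftrightarrow> (f u, f v) \<in> edges B"
    unfolding iso_def by blast
  show ?thesis using assms(2,3) e unfolding simple_graph_def by (auto dest: is_graph_edge)
qed

lemma iso_type_eq: "iso X Y \<Longrightarrow> iso_type X = iso_type Y"
  unfolding iso_type_def using iso_trans iso_sym by blast

lemma iso_type_self: "is_graph X \<Longrightarrow> X \<in> iso_type X"
  unfolding iso_type_def by (simp add: iso_refl)

lemma iso_type_mem: "H \<in> iso_type X \<Longrightarrow> is_graph H \<and> iso H X"
  unfolding iso_type_def by simp


definition comp_of :: "graph \<Rightarrow> nat \<Rightarrow> nat set" where
  "comp_of G v = (edges G)\<^sup>* `` {v}"

definition conn :: "graph \<Rightarrow> bool" where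
  "conn H \<longleftrightarrow> verts H \<noteq> {} \<and> (\<forall>u\<in>verts H. \<forall>v\<in>verts H. (u, v) \<in> (edges H)\<^sup>*)"

lemma component_sets_comp_of: "component_sets G = comp_of G ` verts G"
  unfolding component_sets_def comp_of_def by simp

lemma rtrancl_in_verts:
  assumes "is_graph G" "(u,v) \<in> (edges G)\<^sup>*" "u \<in> verts G" shows "v \<in> verts G"
  using assms(2,3) by (induction rule: rtrancl_induct) (auto dest: is_graph_edge[OF assms(1)])

lemma comp_of_sub: "is_graph G \<Longrightarrow> v \<in> verts G \<Longrightarrow> comp_of G v \<subseteq> verts G"
  unfolding comp_of_def using rtrancl_in_verts by blast

lemma comp_of_self: "v \<in> comp_of G v"
  unfolding comp_of_def by simp

lemma comp_of_eq: assumes "is_graph G" "u \<in> comp_of G v" shows "comp_of G u = comp_of G v"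
proof -
  have s: "sym ((edges G)\<^sup>*)" using assms(1) by (simp add: is_graph_def sym_rtrancl)
  have vu: "(v,u) \<in> (edges G)\<^sup>*" using assms(2) unfolding comp_of_def by simp
  then have uv: "(u,v) \<in> (edges G)\<^sup>*" using s by (simp add: sym_def)
  show ?thesis unfolding comp_of_def using vu uv
    by (auto intro: rtrancl_trans)
qed

lemma comp_closed: assumes "is_graph G" "u \<in> comp_of G v" "(u,w) \<in> edges G" shows "w \<in> comp_of G v"
  using assms unfolding comp_of_def by (auto intro: rtrancl_into_rtrancl)

lemma comp_closed2: assumes "is_graph G" "w \<in> comp_of G v" "(u,w) \<in> edges G" shows "u \<in> comp_of G v"
  using assms comp_closed[of G w v u] is_graph_sym by blast

lemma cs_mem: "S \<in> component_sets G \<Longrightarrow> v \<in> S \<Longrightarrow> is_graph G \<Longrightarrow> S = comp_of G v"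
  unfolding component_sets_comp_of using comp_of_eq by blast

lemma cs_sub: "S \<in> component_sets G \<Longrightarrow> is_graph G \<Longrightarrow> S \<subseteq> verts G"
  unfolding component_sets_comp_of using comp_of_sub by blast

lemma cs_ne: "S \<in> component_sets G \<Longrightarrow> S \<noteq> {}"
  unfolding component_sets_comp_of using comp_of_self by blast

lemma cs_finite: "is_graph G \<Longrightarrow> finite (component_sets G)"
  unfolding component_sets_comp_of by (simp add: is_graph_fin)

lemma cs_closed: "S \<in> component_sets G \<Longrightarrow> is_graph G \<Longrightarrow> (u,w) \<in> edges G \<Longrightarrow> u \<in> S \<Longrightarrow> w \<in> S"
  unfolding component_sets_comp_of using comp_closed by blast

lemma cs_closed2: "S \<in> component_sets G \<Longrightarrow> is_graph G \<Longrightarrow> (u,w) \<in> edges G \<Longrightarrow> w \<in> S \<Longrightarrow> u \<in> S"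
  unfolding component_sets_comp_of using comp_closed2 by blast

lemma induced_verts[simp]: "verts (induced G S) = S" and induced_edges[simp]: "edges (induced G S) = edges G \<inter> (S \<times> S)"
  unfolding induced_def verts_def edges_def by simp_all

lemma induced_graph: "is_graph G \<Longrightarrow> S \<subseteq> verts G \<Longrightarrow> is_graph (induced G S)"
  unfolding is_graph_def by (auto simp: sym_def intro: finite_subset)

lemma induced_simple: "simple_graph G \<Longrightarrow> S \<subseteq> verts G \<Longrightarrow> simple_graph (induced G S)"
  unfolding simple_graph_def using induced_graph by auto

lemma cs_graph: "S \<in> component_sets G \<Longrightarrow> is_graph G \<Longrightarrow> is_graph (induced G S)"
  using induced_graph cs_sub by blast

lemma cs_conn: assumes "S \<in> component_sets G" "is_graph G" shows "conn (induced G S)"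
proof -
  obtain c where c: "c \<in> verts G" "S = comp_of G c" using assms unfolding component_sets_comp_of by blast
  have cS: "c \<in> S" using c comp_of_self by blast
  have P: "(c,x) \<in> (edges G \<inter> S \<times> S)\<^sup>*" if "(c,x) \<in> (edges G)\<^sup>*" for x
    using that
  proof (induction rule: rtrancl_induct)
    case base then show ?case by simp
  next
    case (step y z)
    have "y \<in> S" "z \<in> S" using step c unfolding comp_of_def by (auto intro: rtrancl_into_rtrancl)
    then show ?case using step by (auto intro: rtrancl_into_rtrancl)
  qed
  have sy: "sym (edges G \<inter> S \<times> S)" using assms(2) unfolding is_graph_def sym_def by blast
  have "\<forall>u\<in>S. \<forall>v\<in>S. (u, v) \<in> (edges G \<inter> S \<times> S)\<^sup>*"
  proof (intro ballI)
    fix u v assume "u \<in> S" "v \<in> S"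
    then have "(c,u) \<in> (edges G \<inter> S \<times> S)\<^sup>*" "(c,v) \<in> (edges G \<inter> S \<times> S)\<^sup>*"
      using P c unfolding comp_of_def by auto
    moreover have "sym ((edges G \<inter> S \<times> S)\<^sup>*)" using sy by (rule sym_rtrancl)
    ultimately show "(u, v) \<in> (edges G \<inter> S \<times> S)\<^sup>*" by (meson rtrancl_trans symD)
  qed
  then show ?thesis unfolding conn_def using cS by auto
qed

lemma hom_product:
  assumes F: "is_graph F" and G: "is_graph G"
  shows "hom F G = (\<Prod>S\<in>component_sets F. hom (induced F S) G)"
proof -
  let ?CS = "component_sets F"
  let ?P = "\<lambda>h. \<lambda>S\<in>?CS. restrict h S"
  have bij: "bij_betw ?P (homs F G) (\<Pi>\<^sub>E S\<in>?CS. homs (induced F S) G)"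
  proof (rule bij_betwI')
    fix h1 h2 assume h1: "h1 \<in> homs F G" and h2: "h2 \<in> homs F G"
    show "(?P h1 = ?P h2) = (h1 = h2)"
    proof
      assume eq: "?P h1 = ?P h2"
      show "h1 = h2"
      proof
        fix x show "h1 x = h2 x"
        proof (cases "x \<in> verts F")
          case True
          then have "comp_of F x \<in> ?CS" unfolding component_sets_comp_of by blast
          then show ?thesis using fun_cong[OF eq, of "comp_of F x"] comp_of_self[of x F]
            by (metis restrict_apply')
        next
          case False then show ?thesis using h1 h2 unfolding homs_def by (auto simp: PiE_def extensional_def)
        qed
      qed
    qed simp
  next
    fix h assume h: "h \<in> homs F G"
    show "?P h \<in> (\<Pi>\<^sub>E S\<in>?CS. homs (induced F S) G)"
    proof (rule PiE_I)
      fix S assume S: "S \<in> ?CS"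
      have sub: "S \<subseteq> verts F" using cs_sub[OF S F] .
      show "?P h S \<in> homs (induced F S) G"
        using h sub S unfolding homs_def by auto
    qed simp
  next
    fix \<phi> assume phi: "\<phi> \<in> (\<Pi>\<^sub>E S\<in>?CS. homs (induced F S) G)"
    define h where "h = (\<lambda>v. if v \<in> verts F then \<phi> (comp_of F v) v else undefined)"
    have cv: "v \<in> verts F \<Longrightarrow> comp_of F v \<in> ?CS" for v unfolding component_sets_comp_of by blast
    have hm: "h \<in> homs F G"
      unfolding homs_def
    proof (intro CollectI conjI)
      show "h \<in> verts F \<rightarrow>\<^sub>E verts G"
      proof
        fix v assume v: "v \<in> verts F"
        have "\<phi> (comp_of F v) \<in> homs (induced F (comp_of F v)) G" using phi cv[OF v] by auto
        then show "h v \<in> verts G" using v comp_of_self[of v F] unfolding h_def homs_def by auto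
      qed (simp add: h_def)
      show "\<forall>(u, v)\<in>edges F. (h u, h v) \<in> edges G"
      proof clarify
        fix u v assume uv: "(u,v) \<in> edges F"
        have uV: "u \<in> verts F" "v \<in> verts F" using is_graph_edge[OF F uv] by auto
        have vc: "v \<in> comp_of F u" using comp_closed[OF F comp_of_self uv] .
        have ceq: "comp_of F v = comp_of F u" using comp_of_eq[OF F vc] .
        have "\<phi> (comp_of F u) \<in> homs (induced F (comp_of F u)) G" using phi cv[OF uV(1)] by auto
        moreover have "(u,v) \<in> edges (induced F (comp_of F u))" using uv vc comp_of_self[of u F] by simp
        ultimately show "(h u, h v) \<in> edges G" unfolding homs_def h_def using uV ceq by auto
      qed
    qed
    have "?P h = \<phi>"
    proof
      fix S show "?P h S = \<phi> S"
      proof (cases "S \<in> ?CS")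
        case True
        have ext: "\<phi> S \<in> homs (induced F S) G" using phi True by auto
        show ?thesis
        proof
          fix v show "?P h S v = \<phi> S v"
          proof (cases "v \<in> S")
            case True2: True
            have "S = comp_of F v" using cs_mem[OF True True2 F] .
            moreover have "v \<in> verts F" using cs_sub[OF True F] True2 by auto
            ultimately show ?thesis using True True2 unfolding h_def by simp
          next
            case False
            then show ?thesis using True ext unfolding homs_def by (auto simp: PiE_def extensional_def)
          qed
        qed
      next
        case False then show ?thesis using phi by (auto simp: PiE_def extensional_def)
      qed
    qed
    then show "\<exists>h\<in>homs F G. \<phi> = ?P h" using hm by blast
  qed
  have "hom F G = card (\<Pi>\<^sub>E S\<in>?CS. homs (induced F S) G)"
    unfolding hom_def using bij_betw_same_card[OF bij] .
  also have "\<dots> = (\<Prod>S\<in>?CS. hom (induced F S) G)"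
    unfolding hom_def by (rule card_PiE[OF cs_finite[OF F]])
  finally show ?thesis .
qed

definition rep :: "graph set \<Rightarrow> graph" where
  "rep t = (SOME H. H \<in> t \<and> conn H)"

definition cv :: "graph \<Rightarrow> graph set \<Rightarrow> nat" where
  "cv G t = card {S \<in> component_sets G. iso_type (induced G S) = t}"

lemma comp_vec_cv: "comp_vec G t = real (cv G t)"
  unfolding comp_vec_def cv_def by simp

lemma rep_comp:
  assumes "S \<in> component_sets G" "is_graph G"
  shows "rep (iso_type (induced G S)) \<in> iso_type (induced G S) \<and> conn (rep (iso_type (induced G S)))"
proof -
  have "induced G S \<in> iso_type (induced G S) \<and> conn (induced G S)"
    using iso_type_self cs_graph cs_conn assms by blast
  then show ?thesis unfolding rep_def by (rule someI)
qed

lemma Gamma_rep: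
  assumes "t \<in> Gamma G" "is_graph G"
  shows "\<exists>S\<in>component_sets G. t = iso_type (induced G S) \<and> iso (rep t) (induced G S) \<and> is_graph (rep t) \<and> conn (rep t)"
proof -
  obtain S where S: "S \<in> component_sets G" "t = iso_type (induced G S)"
    using assms unfolding Gamma_def components_def by blast
  then show ?thesis using rep_comp[OF S(1) assms(2)] iso_type_mem by blast
qed

lemma hom_grouped:
  assumes F: "is_graph F" and G: "is_graph G" and T: "finite T" "Gamma F \<subseteq> T"
  shows "hom F G = (\<Prod>t\<in>T. hom (rep t) G ^ cv F t)"
proof -
  let ?CS = "component_sets F"
  let ?g = "\<lambda>S. iso_type (induced F S)"
  have sub: "?g ` ?CS \<subseteq> T" using T unfolding Gamma_def components_def by auto
  have "hom F G = (\<Prod>S\<in>?CS. hom (induced F S) G)" by (rule hom_product[OF F G])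
  also have "\<dots> = (\<Prod>t\<in>T. \<Prod>S\<in>{S. S \<in> ?CS \<and> ?g S = t}. hom (induced F S) G)"
    by (rule prod.group[symmetric, OF cs_finite[OF F] T(1) sub])
  also have "\<dots> = (\<Prod>t\<in>T. hom (rep t) G ^ cv F t)"
  proof (rule prod.cong[OF refl])
    fix t assume "t \<in> T"
    have "(\<Prod>S\<in>{S. S \<in> ?CS \<and> ?g S = t}. hom (induced F S) G) = (\<Prod>S\<in>{S. S \<in> ?CS \<and> ?g S = t}. hom (rep t) G)"
    proof (rule prod.cong[OF refl])
      fix S assume S: "S \<in> {S. S \<in> ?CS \<and> ?g S = t}"
      then have "rep t \<in> iso_type (induced F S)" using rep_comp[of S F] F by auto
      then have "iso (rep t) (induced F S)" "is_graph (rep t)" using iso_type_mem by auto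
      then show "hom (induced F S) G = hom (rep t) G"
        using hom_iso cs_graph S F G by auto
    qed
    then show "(\<Prod>S\<in>{S. S \<in> ?CS \<and> ?g S = t}. hom (induced F S) G) = hom (rep t) G ^ cv F t"
      unfolding cv_def by simp
  qed
  finally show ?thesis .
qed

lemma cv_pos_Gamma: "cv F t > 0 \<Longrightarrow> t \<in> Gamma F"
  unfolding cv_def Gamma_def components_def
  by (metis (mono_tags, lifting) card.empty empty_Collect_eq image_eqI less_irrefl mem_Collect_eq)

lemma cv_finite: "is_graph F \<Longrightarrow> finite {S \<in> component_sets F. iso_type (induced F S) = t}"
  using cs_finite by auto

lemma Gamma_finite: "is_graph F \<Longrightarrow> finite (Gamma F)"
  unfolding Gamma_def components_def using cs_finite by auto

lemma hom_induced_pos: assumes "is_graph G" "S \<subseteq> verts G" shows "hom (induced G S) G > 0"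
proof -
  have "restrict id S \<in> homs (induced G S) G" using assms unfolding homs_def by auto
  then show ?thesis using hom_pos_iff induced_graph assms by blast
qed

lemma Gamma_hom_pos:
  assumes "t \<in> Gamma F" "is_graph F"
  shows "hom (rep t) F > 0"
proof -
  obtain S where S: "S\<in>component_sets F" "iso (rep t) (induced F S)" "is_graph (rep t)"
    using Gamma_rep[OF assms] by blast
  have "hom (induced F S) F > 0" using hom_induced_pos assms cs_sub S by blast
  then show ?thesis using hom_iso[OF S(2) S(3) cs_graph[OF S(1) assms(2)] assms(2)] by simp
qed


lemma ln_hom:
  assumes "is_graph F" "is_graph X" "finite T" "Gamma F \<subseteq> T" "\<forall>t\<in>T. hom (rep t) X > 0"
  shows "ln (real (hom F X)) = (\<Sum>t\<in>T. real (cv F t) * ln (real (hom (rep t) X)))"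
proof -
  have e: "real (hom F X) = (\<Prod>t\<in>T. real (hom (rep t) X) ^ cv F t)"
    using hom_grouped[OF assms(1-4)] by simp
  have "ln (\<Prod>t\<in>T. real (hom (rep t) X) ^ cv F t) = (\<Sum>t\<in>T. ln (real (hom (rep t) X) ^ cv F t))"
    using assms(3,5) by (intro ln_prod) auto
  then have "ln (real (hom F X)) = (\<Sum>t\<in>T. ln (real (hom (rep t) X) ^ cv F t))"
    using e by simp
  also have "\<dots> = (\<Sum>t\<in>T. real (cv F t) * ln (real (hom (rep t) X)))"
    using assms(5) by (intro sum.cong) (auto simp: ln_realpow)
  finally show ?thesis .
qed

lemma Gamma_class_fin:
  assumes prof: "ess_profinite \<F>" and K: "is_graph K"
  shows "finite (Gamma_class (restrict_to \<F> K \<union> {K}))"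
proof -
  have "Gamma_class (restrict_to \<F> K \<union> {K}) = Gamma_class (restrict_to \<F> K) \<union> Gamma K"
    unfolding Gamma_class_def by auto
  moreover have "finite (Gamma_class (restrict_to \<F> K))" using prof K unfolding ess_profinite_def ess_finite_def by blast
  ultimately show ?thesis using K Gamma_finite by simp
qed

lemma restrict_toD: "F \<in> restrict_to \<F> K \<Longrightarrow> F \<in> \<F> \<and> hom F K > 0"
  unfolding restrict_to_def by auto

lemma span_imp_cl:
  assumes simple: "\<forall>F\<in>\<F>. simple_graph F" and prof: "ess_profinite \<F>" and K: "is_graph K"
    and span: "in_span_on (Gamma_class (restrict_to \<F> K \<union> {K})) (comp_vec ` restrict_to \<F> K) (comp_vec K)"
  shows "K \<in> hd_cl \<F>"
proof -
  let ?FK = "restrict_to \<F> K"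
  let ?T = "Gamma_class (?FK \<union> {K})"
  have Tfin: "finite ?T" using Gamma_class_fin[OF prof K] .
  have GK: "Gamma K \<subseteq> ?T" unfolding Gamma_class_def by auto
  have GF: "F \<in> ?FK \<Longrightarrow> Gamma F \<subseteq> ?T" for F unfolding Gamma_class_def by auto
  have FKg: "F \<in> ?FK \<Longrightarrow> is_graph F" for F using simple restrict_toD simple_graph_def by blast
  have FKs: "F \<in> ?FK \<Longrightarrow> simple_graph F" for F using simple restrict_toD by blast
  have FKp: "F \<in> ?FK \<Longrightarrow> hom F K > 0" for F using restrict_toD by blast
  obtain S c where S: "finite S" "S \<subseteq> comp_vec ` ?FK"
    and sp: "\<forall>t\<in>?T. comp_vec K t = (\<Sum>w\<in>S. c w * w t)"
    using span unfolding in_span_on_def by blast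
  define Fw where "Fw w = (SOME F. F \<in> ?FK \<and> comp_vec F = w)" for w
  have Fw: "Fw w \<in> ?FK \<and> comp_vec (Fw w) = w" if w: "w \<in> S" for w
  proof -
    have "\<exists>F. F \<in> ?FK \<and> comp_vec F = w" using S(2) w by blast
    then show ?thesis unfolding Fw_def by (rule someI_ex)
  qed
  have Z: "cv K t = 0" if "t \<in> ?T" "t \<notin> Gamma_class ?FK" for t
  proof -
    have "w t = 0" if "w \<in> S" for w
    proof -
      have "t \<notin> Gamma (Fw w)" using Fw[OF that] \<open>t \<notin> Gamma_class ?FK\<close> unfolding Gamma_class_def by blast
      then have "cv (Fw w) t = 0" using cv_pos_Gamma by blast
      moreover have "w t = comp_vec (Fw w) t" using Fw[OF that] by simp
      ultimately show ?thesis using comp_vec_cv by simp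
    qed
    then have "(\<Sum>w\<in>S. c w * w t) = 0" by (intro sum.neutral ballI) (simp add: \<open>\<And>w. w \<in> S \<Longrightarrow> w t = 0\<close>)
    moreover have "comp_vec K t = (\<Sum>w\<in>S. c w * w t)" using sp that(1) by blast
    ultimately have "real (cv K t) = 0" by (simp add: comp_vec_cv)
    then show ?thesis by simp
  qed
  have Ksimple: "simple_graph K"
  proof -
    have "(v, v) \<notin> edges K" for v
    proof
      assume vv: "(v, v) \<in> edges K"
      have v: "v \<in> verts K" using is_graph_edge[OF K vv] by simp
      let ?S0 = "comp_of K v"
      have S0: "?S0 \<in> component_sets K" using v unfolding component_sets_comp_of by blast
      let ?t = "iso_type (induced K ?S0)"
      have tG: "?t \<in> Gamma K" unfolding Gamma_def components_def using S0 by blast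
      have "cv K ?t > 0" unfolding cv_def using S0 cv_finite[OF K]
        by (auto simp: card_gt_0_iff)
      moreover have "?t \<notin> Gamma_class ?FK"
      proof
        assume "?t \<in> Gamma_class ?FK"
        then obtain F where F: "F \<in> ?FK" "?t \<in> Gamma F" unfolding Gamma_class_def by blast
        then obtain S' where S': "S' \<in> component_sets F" "?t = iso_type (induced F S')"
          unfolding Gamma_def components_def by blast
        have "induced K ?S0 \<in> iso_type (induced F S')" using S'(2) iso_type_self[OF cs_graph[OF S0 K]] by simp
        then have "iso (induced K ?S0) (induced F S')" using iso_type_mem by blast
        moreover have "simple_graph (induced F S')" using induced_simple FKs[OF F(1)] cs_sub[OF S'(1) FKg[OF F(1)]] by blast
        ultimately have "simple_graph (induced K ?S0)" using simple_iso cs_graph[OF S0 K] by blast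
        moreover have "(v,v) \<in> edges (induced K ?S0)" using vv comp_of_self[of v K] by simp
        ultimately show False unfolding simple_graph_def by blast
      qed
      ultimately show False using Z[OF _] GK tG by (metis less_irrefl subsetD)
    qed
    then show ?thesis using K unfolding simple_graph_def by blast
  qed
  have main: "hom K G = hom K H" if G: "simple_graph G" and H: "simple_graph H" and eqv: "hom_equiv \<F> G H" for G H
  proof -
    have Gg: "is_graph G" and Hg: "is_graph H" using G H simple_graph_def by auto
    have eqF: "F \<in> ?FK \<Longrightarrow> hom F G = hom F H" for F using eqv restrict_toD unfolding hom_equiv_def by blast
    have transfer: "hom K Y > 0"
      if Xg: "is_graph X" and Yg: "is_graph Y" and pos: "hom K X > 0" and eq: "\<And>F. F \<in> ?FK \<Longrightarrow> hom F X = hom F Y" for X Y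
    proof -
      have "hom (rep t) Y > 0" if t: "t \<in> Gamma_class ?FK" for t
      proof -
        obtain F where F: "F \<in> ?FK" "t \<in> Gamma F" using t unfolding Gamma_class_def by blast
        have "hom F X > 0" using hom_comp_pos[OF FKg[OF F(1)] K Xg FKp[OF F(1)] pos] .
        then have FY: "hom F Y > 0" using eq F by simp
        obtain S where "S\<in>component_sets F" "is_graph (rep t)" using Gamma_rep[OF F(2) FKg[OF F(1)]] by blast
        then show ?thesis using hom_comp_pos[OF _ FKg[OF F(1)] Yg Gamma_hom_pos[OF F(2) FKg[OF F(1)]] FY] by blast
      qed
      then have "\<forall>t\<in>?T. hom (rep t) Y ^ cv K t > 0" using Z by (metis gr0I power_0 zero_less_one zero_less_power)
      then show ?thesis using hom_grouped[OF K Yg Tfin GK] by (simp add: prod_pos)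
    qed
    show ?thesis
    proof (cases "hom K G > 0")
      case False
      then have "\<not> hom K H > 0" using transfer[OF Hg Gg] eqF by metis
      then show ?thesis using False by simp
    next
      case True
      then have KH: "hom K H > 0" using transfer[OF Gg Hg] eqF by metis
      have allpos: "\<forall>t\<in>?T. hom (rep t) X > 0" if Xg: "is_graph X" and KX: "hom K X > 0" for X
      proof
        fix t assume t: "t \<in> ?T"
        then consider "t \<in> Gamma K" | F where "F \<in> ?FK" "t \<in> Gamma F" unfolding Gamma_class_def by blast
        then show "hom (rep t) X > 0"
        proof cases
          case 1
          obtain S where "is_graph (rep t)" using Gamma_rep[OF 1 K] by blast
          then show ?thesis using hom_comp_pos[OF _ K Xg Gamma_hom_pos[OF 1 K] KX] by blast
        next
          case 2
          have FX: "hom F X > 0" using hom_comp_pos[OF FKg[OF 2(1)] K Xg FKp[OF 2(1)] KX] .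
          obtain S where "is_graph (rep t)" using Gamma_rep[OF 2(2) FKg[OF 2(1)]] by blast
          then show ?thesis using hom_comp_pos[OF _ FKg[OF 2(1)] Xg Gamma_hom_pos[OF 2(2) FKg[OF 2(1)]] FX] by blast
        qed
      qed
      have lnK: "ln (real (hom K X)) = (\<Sum>w\<in>S. c w * ln (real (hom (Fw w) X)))"
        if Xg: "is_graph X" and KX: "hom K X > 0" for X
      proof -
        have ap: "\<forall>t\<in>?T. hom (rep t) X > 0" using allpos[OF Xg KX] .
        have "ln (real (hom K X)) = (\<Sum>t\<in>?T. real (cv K t) * ln (real (hom (rep t) X)))"
          using ln_hom[OF K Xg Tfin GK ap] .
        also have "\<dots> = (\<Sum>t\<in>?T. (\<Sum>w\<in>S. c w * w t) * ln (real (hom (rep t) X)))"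
          using sp comp_vec_cv by (intro sum.cong) auto
        also have "\<dots> = (\<Sum>w\<in>S. c w * (\<Sum>t\<in>?T. w t * ln (real (hom (rep t) X))))"
          by (simp add: sum_distrib_left sum_distrib_right mult.assoc) (rule sum.swap)
        also have "\<dots> = (\<Sum>w\<in>S. c w * ln (real (hom (Fw w) X)))"
        proof (rule sum.cong[OF refl])
          fix w assume w: "w \<in> S"
          have "ln (real (hom (Fw w) X)) = (\<Sum>t\<in>?T. real (cv (Fw w) t) * ln (real (hom (rep t) X)))"
            using ln_hom[OF FKg[OF Fw[OF w, THEN conjunct1]] Xg Tfin GF[OF Fw[OF w, THEN conjunct1]] ap] .
          then show "c w * (\<Sum>t\<in>?T. w t * ln (real (hom (rep t) X))) = c w * ln (real (hom (Fw w) X))"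
            using Fw[OF w] comp_vec_cv by (metis (no_types, lifting) sum.cong)
        qed
        finally show ?thesis .
      qed
      have "ln (real (hom K G)) = ln (real (hom K H))"
        using lnK[OF Gg True] lnK[OF Hg KH] eqF Fw by simp
      then show ?thesis using True KH by simp
    qed
  qed
  show ?thesis unfolding hd_cl_def using Ksimple main by blast
qed


lemma alt_sum_Pow:
  assumes "finite A"
  shows "(\<Sum>U\<in>Pow A. (-1::real) ^ card U) = (if A = {} then 1 else 0)"
proof (cases "A = {}")
  case True then show ?thesis by simp
next
  case False
  then have "{} \<subset> A" by blast
  from card_subsupersets_even_odd[OF assms this]
  have "card {x. x \<in> Pow A \<and> even (card x)} = card {x. x \<in> Pow A \<and> odd (card x)}" by simp
  from sum_alternating_cancels[OF _ this] assms False show ?thesis by simp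
qed

definition el :: "graph \<Rightarrow> (nat + nat \<times> nat) set" where
  "el X = Inl ` verts X \<union> Inr ` edges X"

definition img :: "(nat \<Rightarrow> nat) \<Rightarrow> graph \<Rightarrow> (nat + nat \<times> nat) set" where
  "img h F = Inl ` (h ` verts F) \<union> Inr ` ((\<lambda>(u,v). (h u, h v)) ` edges F)"

definition del :: "graph \<Rightarrow> (nat + nat \<times> nat) set \<Rightarrow> graph" where
  "del X U = (verts X - {v. Inl v \<in> U},
     {(a,b) \<in> edges X. Inl a \<notin> U \<and> Inl b \<notin> U \<and> Inr (a,b) \<notin> U \<and> Inr (b,a) \<notin> U})"

lemma del_verts[simp]: "verts (del X U) = verts X - {v. Inl v \<in> U}"
  and del_edges[simp]: "edges (del X U) = {(a,b) \<in> edges X. Inl a \<notin> U \<and> Inl b \<notin> U \<and> Inr (a,b) \<notin> U \<and> Inr (b,a) \<notin> U}"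
  unfolding del_def verts_def edges_def by simp_all

lemma del_simple: "simple_graph X \<Longrightarrow> simple_graph (del X U)"
  unfolding simple_graph_def is_graph_def sym_def by (auto intro: finite_subset)

lemma homs_del:
  assumes F: "is_graph F"
  shows "homs F (del X U) = {h \<in> homs F X. U \<inter> img h F = {}}"
proof -
  have "h \<in> homs F (del X U) \<longleftrightarrow> h \<in> homs F X \<and> U \<inter> img h F = {}" for h
  proof
    assume h: "h \<in> homs F (del X U)"
    then have "h \<in> homs F X" unfolding homs_def by (auto simp: PiE_def Pi_def)
    moreover have "U \<inter> img h F = {}" using h unfolding homs_def img_def by (auto simp: PiE_def Pi_def)
    ultimately show "h \<in> homs F X \<and> U \<inter> img h F = {}" by blast
  next
    assume h: "h \<in> homs F X \<and> U \<inter> img h F = {}"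
    have 1: "h \<in> verts F \<rightarrow>\<^sub>E verts (del X U)" using h unfolding homs_def img_def by (auto simp: PiE_def Pi_def)
    have "(h u, h v) \<in> edges (del X U)" if uv: "(u,v) \<in> edges F" for u v
    proof -
      have vu: "(v,u) \<in> edges F" using is_graph_sym[OF F uv] .
      have "u \<in> verts F" "v \<in> verts F" using is_graph_edge[OF F uv] by auto
      then show ?thesis using h uv vu unfolding homs_def img_def by (auto simp: PiE_def Pi_def, force+)
    qed
    then show "h \<in> homs F (del X U)" using 1 unfolding homs_def by auto
  qed
  then show ?thesis by blast
qed

definition surjc :: "graph \<Rightarrow> graph \<Rightarrow> nat" where
  "surjc F X = card {h \<in> homs F X. el X \<subseteq> img h F}"

lemma el_finite: "is_graph X \<Longrightarrow> finite (el X)"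
proof -
  assume X: "is_graph X"
  then have "finite (edges X)" unfolding is_graph_def by (auto intro: finite_subset)
  then show ?thesis using X unfolding el_def by (simp add: is_graph_fin)
qed

lemma img_sub: "h \<in> homs F X \<Longrightarrow> img h F \<subseteq> el X"
  unfolding homs_def img_def el_def by (auto simp: PiE_def Pi_def)

lemma sum_indicator_card:
  assumes "finite A"
  shows "(\<Sum>x\<in>A. if P x then (1::real) else 0) = real (card {x \<in> A. P x})"
proof -
  have "(\<Sum>x\<in>A. if P x then (1::real) else 0) = (\<Sum>x\<in>{x \<in> A. P x}. 1)"
    using assms by (simp add: sum.If_cases Int_def conj_commute)
  then show ?thesis by simp
qed

lemma surjc_ie:
  assumes F: "is_graph F" and X: "is_graph X"
  shows "real (surjc F X) = (\<Sum>U\<in>Pow (el X). (-1) ^ card U * real (hom F (del X U)))"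
proof -
  let ?H = "homs F X"
  let ?M = "\<lambda>h. el X - img h F"
  have Hf: "finite ?H" using F X by (simp add: homs_finite is_graph_fin)
  have Ef: "finite (el X)" using el_finite[OF X] .
  have "(\<Sum>U\<in>Pow (el X). (-1) ^ card U * real (hom F (del X U)))
      = (\<Sum>U\<in>Pow (el X). \<Sum>h\<in>?H. (-1) ^ card U * (if U \<subseteq> ?M h then 1 else 0))"
  proof (rule sum.cong[OF refl])
    fix U assume U: "U \<in> Pow (el X)"
    have "{h \<in> ?H. U \<inter> img h F = {}} = {h \<in> ?H. U \<subseteq> ?M h}" using U by blast
    then have "real (hom F (del X U)) = real (card {h \<in> ?H. U \<subseteq> ?M h})"
      unfolding hom_def homs_del[OF F] by simp
    also have "\<dots> = (\<Sum>h\<in>?H. if U \<subseteq> ?M h then 1 else 0)"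
      using sum_indicator_card[OF Hf] by simp
    finally show "(-1) ^ card U * real (hom F (del X U)) = (\<Sum>h\<in>?H. (-1) ^ card U * (if U \<subseteq> ?M h then 1 else 0))"
      by (simp add: sum_distrib_left)
  qed
  also have "\<dots> = (\<Sum>h\<in>?H. \<Sum>U\<in>Pow (el X). (-1) ^ card U * (if U \<subseteq> ?M h then 1 else 0))"
    by (rule sum.swap)
  also have "\<dots> = (\<Sum>h\<in>?H. \<Sum>U\<in>Pow (?M h). (-1) ^ card U)"
  proof (rule sum.cong[OF refl])
    fix h assume "h \<in> ?H"
    have "(\<Sum>U\<in>Pow (el X). (-1::real) ^ card U * (if U \<subseteq> ?M h then 1 else 0))
        = (\<Sum>U\<in>Pow (el X). if U \<in> Pow (?M h) then (-1) ^ card U else 0)"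
      by (intro sum.cong) auto
    also have "\<dots> = (\<Sum>U\<in>Pow (el X) \<inter> Pow (?M h). (-1) ^ card U)"
      using Ef by (simp only: sum.If_cases finite_Pow_iff) (simp add: Pow_def)
    also have "Pow (el X) \<inter> Pow (?M h) = Pow (?M h)" by auto
    finally show "(\<Sum>U\<in>Pow (el X). (-1::real) ^ card U * (if U \<subseteq> ?M h then 1 else 0)) = (\<Sum>U\<in>Pow (?M h). (-1) ^ card U)" .
  qed
  also have "\<dots> = (\<Sum>h\<in>?H. if ?M h = {} then 1 else 0)"
    using Ef by (intro sum.cong refl alt_sum_Pow) auto
  also have "\<dots> = real (card {h \<in> ?H. ?M h = {}})"
    using sum_indicator_card[OF Hf] by simp
  also have "{h \<in> ?H. ?M h = {}} = {h \<in> ?H. el X \<subseteq> img h F}" by blast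
  finally show ?thesis unfolding surjc_def by simp
qed

lemma edges_finite: "is_graph X \<Longrightarrow> finite (edges X)"
  unfolding is_graph_def by (auto intro: finite_subset)

lemma surjc_iso:
  assumes F: "is_graph F" and X: "is_graph X" and pos: "surjc F X > 0"
  shows "card (verts X) \<le> card (verts F) \<and> card (edges X) \<le> card (edges F) \<and>
     (card (verts F) + card (edges F) \<le> card (verts X) + card (edges X) \<longrightarrow> iso F X)"
proof -
  obtain h where h: "h \<in> homs F X" "el X \<subseteq> img h F"
    using pos unfolding surjc_def by (metis (no_types, lifting) card.empty empty_Collect_eq less_irrefl)
  let ?e = "\<lambda>(u,v). (h u, h v)"
  have hv: "h ` verts F \<subseteq> verts X" using h unfolding homs_def by (auto simp: PiE_def Pi_def)
  have vX: "verts X \<subseteq> h ` verts F" using h(2) unfolding el_def img_def by auto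
  have eX: "edges X \<subseteq> ?e ` edges F" using h(2) unfolding el_def img_def by auto
  have c1: "card (verts X) \<le> card (verts F)"
    using card_mono[OF finite_imageI[OF is_graph_fin[OF F]] vX] card_image_le[OF is_graph_fin[OF F], of h] by linarith
  have c2: "card (edges X) \<le> card (edges F)"
    using card_mono[OF finite_imageI[OF edges_finite[OF F]] eX] card_image_le[OF edges_finite[OF F], of ?e] by linarith
  have "iso F X" if le: "card (verts F) + card (edges F) \<le> card (verts X) + card (edges X)"
  proof -
    have eqv: "card (verts F) = card (verts X)" using c1 c2 le by linarith
    have im: "h ` verts F = verts X" using hv vX by blast
    have inj: "inj_on h (verts F)"
      using eq_card_imp_inj_on[OF is_graph_fin[OF F]] im eqv by (metis card_image_le card_subset_eq eq_card_imp_inj_on finite_imageI is_graph_fin F order_refl)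
    have bij: "bij_betw h (verts F) (verts X)" using inj im unfolding bij_betw_def by blast
    have "\<forall>u\<in>verts F. \<forall>v\<in>verts F. (u, v) \<in> edges F \<longleftrightarrow> (h u, h v) \<in> edges X"
    proof (intro ballI iffI)
      fix u v assume "u \<in> verts F" "v \<in> verts F" "(u,v) \<in> edges F"
      then show "(h u, h v) \<in> edges X" using h(1) unfolding homs_def by auto
    next
      fix u v assume u: "u \<in> verts F" and v: "v \<in> verts F" and e: "(h u, h v) \<in> edges X"
      then obtain u' v' where uv': "(u',v') \<in> edges F" "h u' = h u" "h v' = h v" using eX by auto
      have "u' \<in> verts F" "v' \<in> verts F" using is_graph_edge[OF F uv'(1)] by auto
      then have "u' = u" "v' = v" using inj u v uv' by (auto dest: inj_onD)
      then show "(u,v) \<in> edges F" using uv' by simp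
    qed
    then show ?thesis unfolding iso_def using bij by blast
  qed
  then show ?thesis using c1 c2 by blast
qed

lemma surjc_self: assumes "is_graph X" shows "surjc X X > 0"
proof -
  have "restrict id (verts X) \<in> {h \<in> homs X X. el X \<subseteq> img h X}"
    using assms unfolding homs_def el_def img_def by (auto dest: is_graph_edge simp: image_iff) (force dest: is_graph_edge)
  moreover have "finite (homs X X)" using assms by (simp add: homs_finite is_graph_fin)
  ultimately show ?thesis unfolding surjc_def by (metis (no_types, lifting) card_gt_0_iff empty_iff finite_subset mem_Collect_eq subsetI)
qed

lemma hom_indep:
  fixes \<alpha> :: "graph set \<Rightarrow> real"
  assumes T: "finite T" and simp: "\<And>t. t \<in> T \<Longrightarrow> simple_graph (R t)"
    and niso: "\<And>s t. s \<in> T \<Longrightarrow> t \<in> T \<Longrightarrow> iso (R s) (R t) \<Longrightarrow> s = t"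
    and zero: "\<And>G. simple_graph G \<Longrightarrow> (\<Sum>t\<in>T. \<alpha> t * real (hom (R t) G)) = 0"
  shows "\<forall>t\<in>T. \<alpha> t = 0"
proof (rule ccontr)
  assume "\<not> (\<forall>t\<in>T. \<alpha> t = 0)"
  then have ne: "{t\<in>T. \<alpha> t \<noteq> 0} \<noteq> {}" by blast
  let ?A = "{t\<in>T. \<alpha> t \<noteq> 0}"
  let ?sz = "\<lambda>t. card (verts (R t)) + card (edges (R t))"
  have Af: "finite ?A" using T by simp
  define m where "m = Max (?sz ` ?A)"
  have "m \<in> ?sz ` ?A" unfolding m_def using Af ne by (intro Max_in) auto
  then obtain t0 where t0: "t0 \<in> T" "\<alpha> t0 \<noteq> 0" "?sz t0 = m" by blast
  have maxi: "t \<in> T \<Longrightarrow> \<alpha> t \<noteq> 0 \<Longrightarrow> ?sz t \<le> m" for t unfolding m_def using Af by (intro Max_ge) auto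
  let ?X = "R t0"
  have Xs: "simple_graph ?X" using simp t0 by blast
  have Xg: "is_graph ?X" using Xs simple_graph_def by blast
  have Rg: "t \<in> T \<Longrightarrow> is_graph (R t)" for t using simp simple_graph_def by blast
  have "(\<Sum>t\<in>T. \<alpha> t * real (surjc (R t) ?X))
       = (\<Sum>t\<in>T. \<alpha> t * (\<Sum>U\<in>Pow (el ?X). (-1) ^ card U * real (hom (R t) (del ?X U))))"
    using surjc_ie[OF Rg Xg] by (intro sum.cong) auto
  also have "\<dots> = (\<Sum>U\<in>Pow (el ?X). (-1) ^ card U * (\<Sum>t\<in>T. \<alpha> t * real (hom (R t) (del ?X U))))"
    by (simp add: sum_distrib_left mult.left_commute) (rule sum.swap)
  also have "\<dots> = 0" using zero[OF del_simple[OF Xs]] by simp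
  finally have S0: "(\<Sum>t\<in>T. \<alpha> t * real (surjc (R t) ?X)) = 0" .
  have "(\<Sum>t\<in>T. \<alpha> t * real (surjc (R t) ?X)) = (\<Sum>t\<in>{t0}. \<alpha> t * real (surjc (R t) ?X))"
  proof (rule sum.mono_neutral_right[OF T])
    show "{t0} \<subseteq> T" using t0 by simp
    show "\<forall>t\<in>T - {t0}. \<alpha> t * real (surjc (R t) ?X) = 0"
    proof
      fix t assume t: "t \<in> T - {t0}"
      show "\<alpha> t * real (surjc (R t) ?X) = 0"
      proof (cases "\<alpha> t = 0")
        case False
        have "surjc (R t) ?X = 0"
        proof (rule ccontr)
          assume "surjc (R t) ?X \<noteq> 0"
          then have "surjc (R t) ?X > 0" by simp
          from surjc_iso[OF Rg Xg this] t have c: "card (verts ?X) \<le> card (verts (R t))" "card (edges ?X) \<le> card (edges (R t))"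
            and i: "?sz t \<le> ?sz t0 \<longrightarrow> iso (R t) ?X" by auto
          have "?sz t \<le> ?sz t0" using maxi[of t] t False t0 by auto
          then have "iso (R t) ?X" using i by blast
          then show False using niso[of t t0] t t0 by auto
        qed
        then show ?thesis by simp
      qed simp
    qed
  qed
  then have "\<alpha> t0 * real (surjc ?X ?X) = 0" using S0 by simp
  then show False using t0 surjc_self[OF Xg] by simp
qed


definition unionG :: "graph list \<Rightarrow> graph" where
  "unionG gs = ({prod_encode (i,v) | i v. i < length gs \<and> v \<in> verts (gs!i)},
     {(prod_encode (i,u), prod_encode (i,v)) | i u v. i < length gs \<and> (u,v) \<in> edges (gs!i)})"

lemma unionG_verts: "verts (unionG gs) = {prod_encode (i,v) | i v. i < length gs \<and> v \<in> verts (gs!i)}"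
  and unionG_edges: "edges (unionG gs) = {(prod_encode (i,u), prod_encode (i,v)) | i u v. i < length gs \<and> (u,v) \<in> edges (gs!i)}"
  unfolding unionG_def verts_def edges_def by simp_all

lemma unionG_graph:
  assumes "\<forall>g\<in>set gs. is_graph g" shows "is_graph (unionG gs)"
proof -
  have "verts (unionG gs) = (\<lambda>(i,v). prod_encode (i,v)) ` (SIGMA i:{..<length gs}. verts (gs!i))"
    unfolding unionG_verts by auto
  moreover have "finite (SIGMA i:{..<length gs}. verts (gs!i))"
    using assms by (auto intro!: finite_SigmaI is_graph_fin)
  ultimately have f: "finite (verts (unionG gs))" by simp
  have e: "edges (unionG gs) \<subseteq> verts (unionG gs) \<times> verts (unionG gs)"
    unfolding unionG_verts unionG_edges using assms by (force dest: is_graph_edge)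
  have s: "sym (edges (unionG gs))"
    unfolding unionG_edges sym_def using assms by (force dest: is_graph_sym)
  show ?thesis unfolding is_graph_def using f e s by blast
qed

lemma unionG_simple:
  assumes "\<forall>g\<in>set gs. simple_graph g" shows "simple_graph (unionG gs)"
proof -
  have "is_graph (unionG gs)" using assms unionG_graph simple_graph_def by blast
  moreover have "(v,v) \<notin> edges (unionG gs)" for v
    unfolding unionG_edges using assms unfolding simple_graph_def
    by (auto simp: prod_encode_eq)
  ultimately show ?thesis unfolding simple_graph_def by blast
qed

lemma hom_unionG:
  assumes C: "is_graph C" "conn C" and gs: "\<forall>g\<in>set gs. is_graph g"
  shows "hom C (unionG gs) = (\<Sum>i<length gs. hom C (gs!i))"
proof -
  let ?n = "length gs"
  let ?U = "unionG gs"
  let ?Sig = "SIGMA i:{..<?n}. homs C (gs!i)"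
  let ?m = "\<lambda>(i,h). restrict (\<lambda>x. prod_encode (i, h x)) (verts C)"
  obtain c0 where c0: "c0 \<in> verts C" using C(2) unfolding conn_def by blast
  have bij: "bij_betw ?m ?Sig (homs C ?U)"
  proof (rule bij_betwI')
    fix p q assume p: "p \<in> ?Sig" and q: "q \<in> ?Sig"
    obtain i h where pi: "p = (i,h)" by (cases p)
    obtain j h' where qj: "q = (j,h')" by (cases q)
    show "(?m p = ?m q) = (p = q)"
    proof
      assume eq: "?m p = ?m q"
      have "prod_encode (i, h c0) = prod_encode (j, h' c0)" using fun_cong[OF eq, of c0] c0 pi qj by simp
      then have ij: "i = j" by (simp add: prod_encode_eq)
      have "h = h'"
      proof
        fix x show "h x = h' x"
        proof (cases "x \<in> verts C")
          case True
          then have "prod_encode (i, h x) = prod_encode (j, h' x)" using fun_cong[OF eq, of x] pi qj by simp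
          then show ?thesis by (simp add: prod_encode_eq)
        next
          case False then show ?thesis using p q pi qj unfolding homs_def by (auto simp: PiE_def extensional_def)
        qed
      qed
      then show "p = q" using ij pi qj by simp
    qed simp
  next
    fix p assume p: "p \<in> ?Sig"
    obtain i h where pi: "p = (i,h)" by (cases p)
    have i: "i < ?n" and h: "h \<in> homs C (gs!i)" using p pi by auto
    show "?m p \<in> homs C ?U"
      using i h unfolding pi homs_def unionG_verts unionG_edges
      by (auto simp: PiE_def Pi_def dest: is_graph_edge[OF C(1)])
  next
    fix g assume g: "g \<in> homs C ?U"
    define i where "i = fst (prod_decode (g c0))"
    have blk: "fst (prod_decode (g x)) = i \<and> snd (prod_decode (g x)) \<in> verts (gs!i) \<and> i < ?n" if x: "x \<in> verts C" for x
    proof -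
      have gv: "g y \<in> verts ?U" if "y \<in> verts C" for y using g that unfolding homs_def by auto
      have "(c0, x) \<in> (edges C)\<^sup>*" using C(2) c0 x unfolding conn_def by blast
      then have "fst (prod_decode (g x)) = i"
      proof (induction rule: rtrancl_induct)
        case base then show ?case by (simp add: i_def)
      next
        case (step y z)
        have "(g y, g z) \<in> edges ?U" using g step(2) unfolding homs_def by auto
        then obtain j u v where "g y = prod_encode (j,u)" "g z = prod_encode (j,v)" unfolding unionG_edges by auto
        then show ?case using step(3) by simp
      qed
      moreover obtain j v where "g x = prod_encode (j,v)" "j < ?n" "v \<in> verts (gs!j)" using gv[OF x] unfolding unionG_verts by auto
      ultimately show ?thesis by simp
    qed
    define h where "h = restrict (\<lambda>x. snd (prod_decode (g x))) (verts C)"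
    have i_lt: "i < ?n" using blk[OF c0] by simp
    have hh: "h \<in> homs C (gs!i)"
    proof -
      have "h \<in> verts C \<rightarrow>\<^sub>E verts (gs!i)" unfolding h_def using blk by auto
      moreover have "(h u, h v) \<in> edges (gs!i)" if uv: "(u,v) \<in> edges C" for u v
      proof -
        have uv': "u \<in> verts C" "v \<in> verts C" using is_graph_edge[OF C(1) uv] by auto
        have "(g u, g v) \<in> edges ?U" using g uv unfolding homs_def by auto
        then obtain j a b where ab: "g u = prod_encode (j,a)" "g v = prod_encode (j,b)" "j < ?n" "(a,b) \<in> edges (gs!j)"
          unfolding unionG_edges by auto
        have "j = i" using blk[OF uv'(1)] ab by simp
        then show ?thesis using ab uv' unfolding h_def by simp
      qed
      ultimately show ?thesis unfolding homs_def by auto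
    qed
    have "g = ?m (i,h)"
    proof
      fix x show "g x = ?m (i,h) x"
      proof (cases "x \<in> verts C")
        case True
        have "g x = prod_encode (prod_decode (g x))" by simp
        also have "\<dots> = prod_encode (i, h x)" using blk[OF True] True unfolding h_def by (metis prod.collapse restrict_apply')
        finally show ?thesis using True by simp
      next
        case False then show ?thesis using g unfolding homs_def by (auto simp: PiE_def extensional_def)
      qed
    qed
    then show "\<exists>p\<in>?Sig. g = ?m p" using i_lt hh by blast
  qed
  have "hom C ?U = card ?Sig" unfolding hom_def using bij_betw_same_card[OF bij] by simp
  also have "\<dots> = (\<Sum>i<?n. card (homs C (gs!i)))"
    using gs C by (intro card_SigmaI) (auto intro!: homs_finite is_graph_fin)
  finally show ?thesis unfolding hom_def .
qed

definition prodG :: "graph \<Rightarrow> graph \<Rightarrow> graph" where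
  "prodG G L = ({prod_encode (u,v) | u v. u \<in> verts G \<and> v \<in> verts L},
     {(prod_encode (u,v), prod_encode (u',v')) | u v u' v'. (u,u') \<in> edges G \<and> (v,v') \<in> edges L})"

lemma prodG_verts: "verts (prodG G L) = {prod_encode (u,v) | u v. u \<in> verts G \<and> v \<in> verts L}"
  and prodG_edges: "edges (prodG G L) = {(prod_encode (u,v), prod_encode (u',v')) | u v u' v'. (u,u') \<in> edges G \<and> (v,v') \<in> edges L}"
  unfolding prodG_def verts_def edges_def by simp_all

lemma prodG_simple:
  assumes G: "simple_graph G" and L: "is_graph L" shows "simple_graph (prodG G L)"
proof -
  have Gg: "is_graph G" using G simple_graph_def by blast
  have "verts (prodG G L) = (\<lambda>(u,v). prod_encode (u,v)) ` (verts G \<times> verts L)"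
    unfolding prodG_verts by auto
  then have f: "finite (verts (prodG G L))" using Gg L by (simp add: is_graph_fin)
  have e: "edges (prodG G L) \<subseteq> verts (prodG G L) \<times> verts (prodG G L)"
    unfolding prodG_verts prodG_edges using Gg L by (force dest: is_graph_edge)
  have s: "sym (edges (prodG G L))"
    unfolding prodG_edges sym_def using Gg L by (force dest: is_graph_sym)
  have "(x,x) \<notin> edges (prodG G L)" for x
    unfolding prodG_edges using G unfolding simple_graph_def by (auto simp: prod_encode_eq)
  then show ?thesis unfolding simple_graph_def is_graph_def using f e s by blast
qed

lemma hom_prodG:
  assumes F: "is_graph F" and G: "is_graph G" and L: "is_graph L"
  shows "hom F (prodG G L) = hom F G * hom F L"
proof -
  let ?P = "prodG G L"
  let ?m = "\<lambda>(h1,h2). restrict (\<lambda>x. prod_encode (h1 x, h2 x)) (verts F)"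
  have bij: "bij_betw ?m (homs F G \<times> homs F L) (homs F ?P)"
  proof (rule bij_betwI')
    fix p q assume p: "p \<in> homs F G \<times> homs F L" and q: "q \<in> homs F G \<times> homs F L"
    obtain a b where pa: "p = (a,b)" by (cases p)
    obtain a' b' where qa: "q = (a',b')" by (cases q)
    show "(?m p = ?m q) = (p = q)"
    proof
      assume eq: "?m p = ?m q"
      have "a x = a' x \<and> b x = b' x" for x
      proof (cases "x \<in> verts F")
        case True then show ?thesis using fun_cong[OF eq, of x] pa qa by (simp add: prod_encode_eq)
      next
        case False then show ?thesis using p q pa qa unfolding homs_def by (auto simp: PiE_def extensional_def)
      qed
      then show "p = q" using pa qa by auto
    qed simp
  next
    fix p assume p: "p \<in> homs F G \<times> homs F L"
    then show "?m p \<in> homs F ?P"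
      unfolding homs_def prodG_verts prodG_edges by (auto simp: PiE_def Pi_def dest: is_graph_edge[OF F])
  next
    fix g assume g: "g \<in> homs F ?P"
    define a where "a = restrict (\<lambda>x. fst (prod_decode (g x))) (verts F)"
    define b where "b = restrict (\<lambda>x. snd (prod_decode (g x))) (verts F)"
    have gv: "x \<in> verts F \<Longrightarrow> \<exists>u v. g x = prod_encode (u,v) \<and> u \<in> verts G \<and> v \<in> verts L" for x
      using g unfolding homs_def prodG_verts by auto
    have ge: "(x,y) \<in> edges F \<Longrightarrow> \<exists>u v u' v'. g x = prod_encode (u,v) \<and> g y = prod_encode (u',v') \<and> (u,u') \<in> edges G \<and> (v,v') \<in> edges L" for x y
      using g unfolding homs_def prodG_edges by auto
    have a: "a \<in> homs F G"
      unfolding homs_def a_def using gv ge is_graph_edge[OF F] by (auto simp: PiE_def Pi_def) (metis fst_conv prod_encode_inverse)+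
    have b: "b \<in> homs F L"
      unfolding homs_def b_def using gv ge is_graph_edge[OF F] by (auto simp: PiE_def Pi_def) (metis snd_conv prod_encode_inverse)+
    have "g = ?m (a,b)"
    proof
      fix x show "g x = ?m (a,b) x"
      proof (cases "x \<in> verts F")
        case True then show ?thesis unfolding a_def b_def by simp
      next
        case False then show ?thesis using g unfolding homs_def by (auto simp: PiE_def extensional_def)
      qed
    qed
    then show "\<exists>p\<in>homs F G \<times> homs F L. g = ?m p" using a b by blast
  qed
  show ?thesis unfolding hom_def using bij_betw_same_card[OF bij]
    by (simp add: card_cartesian_product)
qed


definition fscale :: "rat \<Rightarrow> ('a \<Rightarrow> rat) \<Rightarrow> ('a \<Rightarrow> rat)" where
  "fscale c f = (\<lambda>x. c * f x)"

context begin

interpretation fvs: vector_space "fscale :: rat \<Rightarrow> ('a \<Rightarrow> rat) \<Rightarrow> ('a \<Rightarrow> rat)"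
  by unfold_locales (auto simp: fscale_def fun_eq_iff algebra_simps)

interpretation rvs: vector_space "(*) :: rat \<Rightarrow> rat \<Rightarrow> rat"
  by unfold_locales (auto simp: algebra_simps)

interpretation fpair: vector_space_pair "fscale :: rat \<Rightarrow> ('a \<Rightarrow> rat) \<Rightarrow> ('a \<Rightarrow> rat)" "(*) :: rat \<Rightarrow> rat \<Rightarrow> rat"
  by unfold_locales

lemma sum_fun_apply: "(sum f A) x = (\<Sum>a\<in>A. f a x)" for f :: "'b \<Rightarrow> 'a \<Rightarrow> rat"
  by (induction A rule: infinite_finite_induct) auto

lemma separate:
  fixes V :: "('a \<Rightarrow> rat) set" and u :: "'a \<Rightarrow> rat"
  assumes T: "finite T" and VT: "\<forall>v\<in>V. \<forall>x. x \<notin> T \<longrightarrow> v x = 0" and uT: "\<forall>x. x \<notin> T \<longrightarrow> u x = 0"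
  shows "(\<exists>S c. finite S \<and> S \<subseteq> V \<and> (\<forall>x. u x = (\<Sum>w\<in>S. c w * w x))) \<or>
         (\<exists>a. (\<forall>v\<in>V. (\<Sum>t\<in>T. a t * v t) = 0) \<and> (\<Sum>t\<in>T. a t * u t) \<noteq> 0)"
proof (cases "u \<in> fvs.span V")
  case True
  then obtain S r where "finite S" "S \<subseteq> V" "u = (\<Sum>a\<in>S. fscale (r a) a)"
    unfolding fvs.span_explicit by blast
  then show ?thesis by (intro disjI1 exI[of _ S] exI[of _ r]) (auto simp: sum_fun_apply fscale_def)
next
  case False
  obtain B where B: "B \<subseteq> V" "fvs.independent B" "V \<subseteq> fvs.span B"
    using fvs.maximal_independent_subset by blast
  have "fvs.span B \<subseteq> fvs.span V" using B(1) by (rule fvs.span_mono)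
  then have uB: "u \<notin> fvs.span B" using False by blast
  then have uB': "u \<notin> B" using fvs.span_base by blast
  have ind: "fvs.independent (insert u B)" using fvs.independent_insertI[OF uB B(2)] .
  obtain g where g: "Vector_Spaces.linear fscale (*) g" "\<forall>x\<in>insert u B. g x = (if x = u then 1 else 0)"
    using fpair.linear_independent_extend[OF ind, of "\<lambda>x. if x = u then 1 else 0"] by blast
  have gB: "\<And>x. x \<in> B \<Longrightarrow> g x = 0" using g(2) uB' by auto
  have g0: "\<forall>x\<in>fvs.span B. g x = 0"
    using fpair.linear_eq_0_on_span[OF g(1) gB] by blast
  define a where "a t = g (\<lambda>x. if x = t then 1 else 0)" for t
  have ga: "g v = (\<Sum>t\<in>T. a t * v t)" if vT: "\<forall>x. x \<notin> T \<longrightarrow> v x = 0" for v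
  proof -
    have "v = (\<Sum>t\<in>T. fscale (v t) (\<lambda>x. if x = t then 1 else 0))"
    proof
      fix x show "v x = (\<Sum>t\<in>T. fscale (v t) (\<lambda>x. if x = t then 1 else 0)) x"
        unfolding sum_fun_apply fscale_def using T vT by (cases "x \<in> T") (auto simp: if_distrib cong: if_cong)
    qed
    then have "g v = (\<Sum>t\<in>T. g (fscale (v t) (\<lambda>x. if x = t then 1 else 0)))"
      using fpair.linear_sum[OF g(1)] by metis
    also have "\<dots> = (\<Sum>t\<in>T. a t * v t)"
      using fpair.linear_scale[OF g(1)] unfolding a_def by (simp add: mult.commute)
    finally show ?thesis .
  qed
  have "\<forall>v\<in>V. (\<Sum>t\<in>T. a t * v t) = 0"
    using ga VT g0 B(3) by (metis subsetD)
  moreover have "(\<Sum>t\<in>T. a t * u t) \<noteq> 0" using ga[OF uT] g(2) by simp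
  ultimately show ?thesis by blast
qed

end


lemma common_denom:
  fixes r :: "'a \<Rightarrow> rat"
  assumes "finite I"
  shows "\<exists>D::nat. D > 0 \<and> (\<forall>i\<in>I. \<exists>z::int. of_nat D * r i = of_int z)"
  using assms
proof (induction I rule: finite_induct)
  case empty then show ?case by (intro exI[of _ 1]) auto
next
  case (insert j I)
  then obtain D where D: "D > 0" "\<forall>i\<in>I. \<exists>z::int. of_nat D * r i = of_int z" by blast
  obtain p q where pq: "quotient_of (r j) = (p, q)" by (cases "quotient_of (r j)")
  have q: "q > 0" using quotient_of_denom_pos[OF pq] .
  have rj: "r j = of_int p / of_int q" using quotient_of_div[OF pq] .
  define D' where "D' = D * nat q"
  have "D' > 0" using D q unfolding D'_def by simp
  moreover have "\<exists>z::int. of_nat D' * r i = of_int z" if i: "i \<in> insert j I" for i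
  proof (cases "i = j")
    case True
    have "of_nat D' * r j = of_int (int D * p)" unfolding D'_def rj using q by (simp add: field_simps)
    then show ?thesis unfolding True by (rule exI)
  next
    case False
    then obtain z where z: "of_nat D * r i = of_int z" using D i by auto
    have "(of_nat D' :: rat) = of_nat D * of_int q" unfolding D'_def using q by (simp add: of_nat_mult)
    then have "of_nat D' * r i = of_int q * (of_nat D * r i)" by (simp add: algebra_simps)
    also have "\<dots> = of_int (q * z)" using z by simp
    finally have "of_nat D' * r i = of_int (q * z)" .
    then show ?thesis by (rule exI)
  qed
  ultimately show ?case by (intro exI[of _ D'] conjI ballI)
qed

lemma sum_list_rep:
  "sum_list (map g (concat (map (\<lambda>G. replicate (f G) G) xs))) = (\<Sum>G\<leftarrow>xs. of_nat (f G) * (g G :: 'b::semiring_1))"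
  by (induction xs) (auto simp: sum_list_replicate)

lemma hom_unionG_rep:
  assumes C: "is_graph C" "conn C" and xs: "distinct xs" "\<forall>g\<in>set xs. is_graph g"
  shows "hom C (unionG (concat (map (\<lambda>G. replicate (f G) G) xs))) = (\<Sum>G\<in>set xs. f G * hom C G)"
proof -
  let ?gs = "concat (map (\<lambda>G. replicate (f G) G) xs)"
  have gs: "\<forall>g\<in>set ?gs. is_graph g" using xs by auto
  have "hom C (unionG ?gs) = (\<Sum>i<length ?gs. hom C (?gs!i))" using hom_unionG[OF C gs] .
  also have "\<dots> = sum_list (map (hom C) ?gs)"
    by (simp add: sum_list_sum_nth atLeast0LessThan)
  also have "\<dots> = (\<Sum>G\<leftarrow>xs. f G * hom C G)" using sum_list_rep[of "hom C" f xs] by simp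
  also have "\<dots> = (\<Sum>G\<in>set xs. f G * hom C G)" using xs(1) by (simp add: sum_list_distinct_conv_sum_set)
  finally show ?thesis .
qed

lemma basis_rep:
  fixes T :: "graph set set" and R :: "graph set \<Rightarrow> graph"
  assumes T: "finite T" and simp: "\<And>t. t \<in> T \<Longrightarrow> simple_graph (R t)"
    and niso: "\<And>s t. s \<in> T \<Longrightarrow> t \<in> T \<Longrightarrow> iso (R s) (R t) \<Longrightarrow> s = t"
    and s: "s \<in> T"
  shows "\<exists>\<G> e. finite \<G> \<and> (\<forall>G\<in>\<G>. simple_graph G) \<and>
           (\<forall>t\<in>T. (if t = s then 1 else 0) = (\<Sum>G\<in>\<G>. e G * (of_nat (hom (R t) G) :: rat)))"
proof -
  let ?hv = "\<lambda>G. (\<lambda>t. if t \<in> T then of_nat (hom (R t) G) else 0) :: graph set \<Rightarrow> rat"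
  let ?V = "?hv ` {G. simple_graph G}"
  let ?u = "(\<lambda>t. if t = s then 1 else 0) :: graph set \<Rightarrow> rat"
  have VT: "\<forall>v\<in>?V. \<forall>x. x \<notin> T \<longrightarrow> v x = 0" by auto
  have uT: "\<forall>x. x \<notin> T \<longrightarrow> ?u x = 0" using s by auto
  from separate[OF T VT uT] show ?thesis
  proof
    assume "\<exists>S c. finite S \<and> S \<subseteq> ?V \<and> (\<forall>x. ?u x = (\<Sum>w\<in>S. c w * w x))"
    then obtain S c where S: "finite S" "S \<subseteq> ?V" and eq: "\<forall>x. ?u x = (\<Sum>w\<in>S. c w * w x)" by blast
    define Gw where "Gw w = (SOME G. simple_graph G \<and> ?hv G = w)" for w
    have Gw: "simple_graph (Gw w) \<and> ?hv (Gw w) = w" if "w \<in> S" for w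
    proof -
      have "\<exists>G. simple_graph G \<and> ?hv G = w" using S(2) that by blast
      then show ?thesis unfolding Gw_def by (rule someI_ex)
    qed
    have inj: "inj_on Gw S"
    proof (rule inj_onI)
      fix x y assume x: "x \<in> S" and y: "y \<in> S" and eq: "Gw x = Gw y"
      have 1: "?hv (Gw x) = x" using Gw[OF x] by blast
      have 2: "?hv (Gw y) = y" using Gw[OF y] by blast
      have "x = ?hv (Gw x)" using 1 by (rule sym)
      also have "\<dots> = ?hv (Gw y)" by (simp only: eq)
      also have "\<dots> = y" by (rule 2)
      finally show "x = y" .
    qed
    define e where "e G = c (the_inv_into S Gw G)" for G
    have "\<forall>t\<in>T. ?u t = (\<Sum>G\<in>Gw ` S. e G * of_nat (hom (R t) G))"
    proof
      fix t assume t: "t \<in> T"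
      have "(\<Sum>G\<in>Gw ` S. e G * of_nat (hom (R t) G)) = (\<Sum>w\<in>S. e (Gw w) * of_nat (hom (R t) (Gw w)))"
        by (rule sum.reindex[OF inj, unfolded comp_def])
      also have "\<dots> = (\<Sum>w\<in>S. c w * w t)"
      proof (rule sum.cong[OF refl])
        fix w assume w: "w \<in> S"
        have "e (Gw w) = c w" unfolding e_def using the_inv_into_f_f[OF inj w] by simp
        moreover have "of_nat (hom (R t) (Gw w)) = w t"
        proof -
          have "?hv (Gw w) = w" using Gw[OF w] by blast
          then have "?hv (Gw w) t = w t" by (rule fun_cong)
          then show ?thesis using t by simp
        qed
        ultimately show "e (Gw w) * of_nat (hom (R t) (Gw w)) = c w * w t" by simp
      qed
      finally show "?u t = (\<Sum>G\<in>Gw ` S. e G * of_nat (hom (R t) G))" using eq by simp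
    qed
    moreover have "\<forall>G\<in>Gw ` S. simple_graph G" using Gw by blast
    ultimately show ?thesis using S(1) by blast
  next
    assume "\<exists>a. (\<forall>v\<in>?V. (\<Sum>t\<in>T. a t * v t) = 0) \<and> (\<Sum>t\<in>T. a t * ?u t) \<noteq> 0"
    then obtain a where a0: "\<forall>v\<in>?V. (\<Sum>t\<in>T. a t * v t) = 0" and a1: "(\<Sum>t\<in>T. a t * ?u t) \<noteq> 0" by blast
    have "(\<Sum>t\<in>T. real_of_rat (a t) * real (hom (R t) G)) = 0" if G: "simple_graph G" for G
    proof -
      have m: "?hv G \<in> ?V" using G by blast
      have "(\<Sum>t\<in>T. a t * ?hv G t) = 0" by (rule bspec[OF a0 m])
      moreover have "(\<Sum>t\<in>T. a t * ?hv G t) = (\<Sum>t\<in>T. a t * of_nat (hom (R t) G))" by (rule sum.cong) auto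
      ultimately have "(\<Sum>t\<in>T. a t * of_nat (hom (R t) G)) = 0" by simp
      then have "real_of_rat (\<Sum>t\<in>T. a t * of_nat (hom (R t) G)) = 0" by simp
      then show ?thesis by (simp add: of_rat_sum of_rat_mult)
    qed
    from hom_indep[OF T simp niso this] have "real_of_rat (a s) = 0" using s by blast
    moreover have "(\<Sum>t\<in>T. a t * ?u t) = a s" using T s by (simp add: if_distrib sum.delta cong: if_cong)
    ultimately show ?thesis using a1 by simp
  qed
qed


lemma realize:
  fixes T :: "graph set set" and R :: "graph set \<Rightarrow> graph"
  assumes T: "finite T" and simp: "\<And>t. t \<in> T \<Longrightarrow> simple_graph (R t)"
    and cn: "\<And>t. t \<in> T \<Longrightarrow> conn (R t)"
    and niso: "\<And>s t. s \<in> T \<Longrightarrow> t \<in> T \<Longrightarrow> iso (R s) (R t) \<Longrightarrow> s = t"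
  shows "\<exists>D::nat. D > 0 \<and> (\<exists>m::graph set \<Rightarrow> nat. (\<forall>t\<in>T. m t > 0) \<and>
     (\<forall>k::nat. k \<ge> 1 \<longrightarrow> (\<exists>N0::nat. \<forall>N \<ge> N0. N \<ge> 1 \<and> (\<forall>y::graph set \<Rightarrow> nat.
        (\<forall>t\<in>T. m t * N^k \<le> y t \<and> y t \<le> m t * N^k + m t * 3^k * N^(k-1)) \<longrightarrow>
        (\<exists>Y. simple_graph Y \<and> (\<forall>t\<in>T. hom (R t) Y = D * y t))))))"
proof -
  let ?P = "\<lambda>s \<G> e. finite \<G> \<and> (\<forall>G\<in>\<G>. simple_graph G) \<and>
           (\<forall>t\<in>T. (if t = s then 1 else 0) = (\<Sum>G\<in>\<G>. e G * (of_nat (hom (R t) G) :: rat)))"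
  define GG where "GG s = (SOME \<G>. \<exists>e. ?P s \<G> e)" for s
  define ee where "ee s = (SOME e. ?P s (GG s) e)" for s
  have Pse: "?P s (GG s) (ee s)" if s: "s \<in> T" for s
  proof -
    have "\<exists>\<G> e. ?P s \<G> e" using basis_rep[OF T simp niso s] .
    then have "\<exists>e. ?P s (GG s) e" unfolding GG_def by (rule someI_ex)
    then show ?thesis unfolding ee_def by (rule someI_ex)
  qed
  define \<G> where "\<G> = (\<Union>s\<in>T. GG s)"
  have Gfin: "finite \<G>" unfolding \<G>_def using T Pse by auto
  have Gsimp: "\<forall>G\<in>\<G>. simple_graph G" unfolding \<G>_def using Pse by auto
  define E where "E s G = (if G \<in> GG s then ee s G else 0)" for s G
  have Eeq: "(if t = s then 1 else 0) = (\<Sum>G\<in>\<G>. E s G * (of_nat (hom (R t) G) :: rat))"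
    if s: "s \<in> T" and t: "t \<in> T" for s t
  proof -
    have "(\<Sum>G\<in>\<G>. E s G * (of_nat (hom (R t) G) :: rat)) = (\<Sum>G\<in>GG s. ee s G * of_nat (hom (R t) G))"
      by (rule sum.mono_neutral_cong_right[OF Gfin]) (use s in \<open>auto simp: \<G>_def E_def\<close>)
    then show ?thesis using Pse[OF s] t by simp
  qed
  obtain D where D: "D > 0" "\<forall>i\<in>T \<times> \<G>. \<exists>z::int. of_nat D * (case_prod E) i = of_int z"
    using common_denom[of "T \<times> \<G>" "case_prod E"] T Gfin by blast
  define A where "A s G = (SOME z::int. of_nat D * E s G = of_int z)" for s G
  have Aeq: "of_nat D * E s G = of_int (A s G)" if "s \<in> T" "G \<in> \<G>" for s G
  proof -
    have "\<exists>z::int. of_nat D * E s G = of_int z" using D(2) that by auto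
    then show ?thesis unfolding A_def by (rule someI_ex)
  qed
  have Aint: "int D * (if t = s then 1 else 0) = (\<Sum>G\<in>\<G>. A s G * int (hom (R t) G))"
    if s: "s \<in> T" and t: "t \<in> T" for s t
  proof -
    have "(of_int (\<Sum>G\<in>\<G>. A s G * int (hom (R t) G)) :: rat) = (\<Sum>G\<in>\<G>. of_int (A s G) * of_nat (hom (R t) G))"
      by simp
    also have "\<dots> = (\<Sum>G\<in>\<G>. of_nat D * (E s G * of_nat (hom (R t) G)))"
      using Aeq[OF s] by (intro sum.cong) (auto simp: mult.assoc[symmetric])
    also have "\<dots> = of_nat D * (\<Sum>G\<in>\<G>. E s G * of_nat (hom (R t) G))"
      by (simp add: sum_distrib_left)
    also have "\<dots> = of_nat D * (if t = s then 1 else 0)" using Eeq[OF s t] by simp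
    also have "\<dots> = of_int (int D * (if t = s then 1 else 0))" by simp
    finally show ?thesis by (simp only: of_int_eq_iff)
  qed
  define m where "m t = (\<Sum>G\<in>\<G>. hom (R t) G)" for t
  have mpos: "\<forall>t\<in>T. m t > 0"
  proof
    fix t assume t: "t \<in> T"
    show "m t > 0"
    proof (rule ccontr)
      assume "\<not> m t > 0"
      then have "\<forall>G\<in>\<G>. hom (R t) G = 0" unfolding m_def using Gfin by simp
      then have "(\<Sum>G\<in>\<G>. A t G * int (hom (R t) G)) = 0" by simp
      then show False using Aint[OF t t] D(1) by simp
    qed
  qed
  have main: "\<exists>N0::nat. \<forall>N \<ge> N0. N \<ge> 1 \<and> (\<forall>y::graph set \<Rightarrow> nat.
        (\<forall>t\<in>T. m t * N^k \<le> y t \<and> y t \<le> m t * N^k + m t * 3^k * N^(k-1)) \<longrightarrow>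
        (\<exists>Y. simple_graph Y \<and> (\<forall>t\<in>T. hom (R t) Y = D * y t)))" if k: "k \<ge> 1" for k
  proof -
    define B where "B G = (\<Sum>s\<in>T. int (m s * 3^k) * \<bar>A s G\<bar>)" for G
    have B0: "B G \<ge> 0" for G unfolding B_def by (intro sum_nonneg) simp
    define N0 where "N0 = nat (1 + (\<Sum>G\<in>\<G>. B G))"
    have BN0: "B G + 1 \<le> int N0" if "G \<in> \<G>" for G
    proof -
      have "B G \<le> (\<Sum>G\<in>\<G>. B G)" using Gfin that B0 by (intro member_le_sum) auto
      moreover have "(\<Sum>G\<in>\<G>. B G) \<ge> 0" using B0 by (intro sum_nonneg) auto
      ultimately show ?thesis unfolding N0_def by simp
    qed
    have "(\<Sum>G\<in>\<G>. B G) \<ge> 0" using B0 by (intro sum_nonneg) auto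
    then have N0pos: "N0 \<ge> 1" unfolding N0_def by simp
    show ?thesis
    proof (intro exI[of _ N0] allI impI conjI)
      fix N assume N: "N \<ge> N0"
      then show "N \<ge> 1" using N0pos by simp
      fix y :: "graph set \<Rightarrow> nat"
      assume y: "\<forall>t\<in>T. m t * N^k \<le> y t \<and> y t \<le> m t * N^k + m t * 3^k * N^(k-1)"
      define e where "e s = int (y s) - int (m s * N^k)" for s
      have e0: "0 \<le> e s" and e1: "e s \<le> int (m s * 3^k * N^(k-1))" if "s \<in> T" for s
      proof -
        have a: "m s * N^k \<le> y s" and b: "y s \<le> m s * N^k + m s * 3^k * N^(k-1)" using y that by auto
        have "int (m s * N^k) \<le> int (y s)" using a by (simp only: of_nat_le_iff)
        then show "0 \<le> e s" unfolding e_def by linarith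
        have "int (y s) \<le> int (m s * N^k) + int (m s * 3^k * N^(k-1))" using b by (simp only: of_nat_le_iff of_nat_add[symmetric])
        then show "e s \<le> int (m s * 3^k * N^(k-1))" unfolding e_def by linarith
      qed
      define lam where "lam G = int D * int (N^k) + (\<Sum>s\<in>T. e s * A s G)" for G
      have lam0: "lam G \<ge> 0" if G: "G \<in> \<G>" for G
      proof -
        have "\<bar>\<Sum>s\<in>T. e s * A s G\<bar> \<le> (\<Sum>s\<in>T. \<bar>e s * A s G\<bar>)" by (rule sum_abs)
        also have "\<dots> \<le> (\<Sum>s\<in>T. int (m s * 3^k * N^(k-1)) * \<bar>A s G\<bar>)"
        proof (rule sum_mono)
          fix s assume s: "s \<in> T"
          show "\<bar>e s * A s G\<bar> \<le> int (m s * 3^k * N^(k-1)) * \<bar>A s G\<bar>"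
            using e0[OF s] e1[OF s] by (simp add: abs_mult mult_right_mono)
        qed
        also have "\<dots> = B G * int (N^(k-1))" unfolding B_def by (simp add: sum_distrib_right sum_distrib_left mult_ac)
        also have "\<dots> \<le> (int N - 1) * int (N^(k-1))"
          using BN0[OF G] N B0[of G] by (intro mult_right_mono) auto
        also have "\<dots> \<le> int N * int (N^(k-1))" by (simp add: mult_right_mono)
        also have "\<dots> = int (N^k)" using k by (metis Suc_diff_le diff_Suc_1 of_nat_mult power_Suc)
        also have "\<dots> \<le> int D * int (N^k)" proof -
          have "1 * int (N^k) \<le> int D * int (N^k)" using D(1) by (intro mult_right_mono) auto
          then show ?thesis by simp
        qed
        finally show ?thesis unfolding lam_def by linarith
      qed
      have lamh: "(\<Sum>G\<in>\<G>. lam G * int (hom (R t) G)) = int D * int (y t)" if t: "t \<in> T" for t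
      proof -
        have "(\<Sum>G\<in>\<G>. lam G * int (hom (R t) G))
            = int D * int (N^k) * (\<Sum>G\<in>\<G>. int (hom (R t) G)) + (\<Sum>s\<in>T. e s * (\<Sum>G\<in>\<G>. A s G * int (hom (R t) G)))"
          unfolding lam_def by (simp add: algebra_simps sum.distrib sum_distrib_left sum_distrib_right) (rule sum.swap)
        also have "\<dots> = int D * int (N^k) * int (m t) + (\<Sum>s\<in>T. e s * (int D * (if t = s then 1 else 0)))"
          using Aint t unfolding m_def by simp
        also have "\<dots> = int D * int (N^k) * int (m t) + e t * int D"
          using T t by (simp add: if_distrib sum.delta cong: if_cong)
        also have "\<dots> = int D * int (y t)" unfolding e_def using y t by (simp add: algebra_simps)
        finally show ?thesis .
      qed
      obtain xs where xs: "set xs = \<G>" "distinct xs" using finite_distinct_list[OF Gfin] by blast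
      define Y where "Y = unionG (concat (map (\<lambda>G. replicate (nat (lam G)) G) xs))"
      have Ys: "simple_graph Y" unfolding Y_def using Gsimp xs by (intro unionG_simple) auto
      have "hom (R t) Y = D * y t" if t: "t \<in> T" for t
      proof -
        have Rg: "is_graph (R t)" using simp[OF t] simple_graph_def by blast
        have "hom (R t) Y = (\<Sum>G\<in>\<G>. nat (lam G) * hom (R t) G)"
          unfolding Y_def using hom_unionG_rep[OF Rg cn[OF t] xs(2)] xs(1) Gsimp simple_graph_def by auto
        then have "int (hom (R t) Y) = (\<Sum>G\<in>\<G>. lam G * int (hom (R t) G))"
          using lam0 by (simp add: of_nat_sum)
        also have "\<dots> = int (D * y t)" using lamh[OF t] by simp
        finally show ?thesis by (simp only: of_nat_eq_iff)
      qed
      then show "\<exists>Y. simple_graph Y \<and> (\<forall>t\<in>T. hom (R t) Y = D * y t)" using Ys by blast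
    qed
  qed
  show ?thesis using D(1) mpos main by blast
qed


lemma pow_bound: "(N::nat) \<ge> 1 \<Longrightarrow> (N+1)^p \<le> N^p + 3^p * N^(p-1)"
proof (induction p)
  case 0 then show ?case by simp
next
  case (Suc p)
  show ?case
  proof (cases p)
    case 0 then show ?thesis by simp
  next
    case (Suc p')
    have "(N+1)^(Suc p) = (N+1)^p * (N+1)" by simp
    also have "\<dots> \<le> (N^p + 3^p * N^(p-1)) * (N+1)" using Suc.IH Suc.prems by (intro mult_right_mono) auto
    also have "\<dots> \<le> N^(Suc p) + 3^(Suc p) * N^p"
    proof -
      have a: "N^(p-1) * N = N^p" using Suc by (simp add: power_Suc2[symmetric])
      have b: "N^(p-1) \<le> N^p" using Suc.prems Suc by (simp add: power_increasing)
      have "(N^p + 3^p * N^(p-1)) * (N+1) = N^(Suc p) + N^p + 3^p * (N^(p-1) * N) + 3^p * N^(p-1)"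
        by (simp add: algebra_simps)
      also have "\<dots> \<le> N^(Suc p) + N^p + 3^p * N^p + 3^p * N^p" using a b by simp
      also have "\<dots> \<le> N^(Suc p) + 3^(Suc p) * N^p"
      proof -
        have "N^p \<le> 3^p * N^p" by simp
        then show ?thesis by simp
      qed
      finally show ?thesis .
    qed
    finally show ?thesis by simp
  qed
qed

lemma y_bounds:
  assumes N: "(N::nat) \<ge> 1" and k: "k \<ge> 1" and p: "p \<le> k"
  shows "m * N^k \<le> m * (N+1)^p * N^(k-p) \<and> m * (N+1)^p * N^(k-p) \<le> m * N^k + m * 3^k * N^(k-1)"
proof
  have "N^p \<le> (N+1)^p" by (simp add: power_mono)
  then have "N^p * N^(k-p) \<le> (N+1)^p * N^(k-p)" by (intro mult_right_mono) auto
  moreover have "N^p * N^(k-p) = N^k" using p by (simp add: power_add[symmetric])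
  ultimately show "m * N^k \<le> m * (N+1)^p * N^(k-p)" by (simp add: mult.assoc)
next
  have "(N+1)^p * N^(k-p) \<le> N^k + 3^k * N^(k-1)"
  proof (cases "p = 0")
    case True then show ?thesis by simp
  next
    case False
    have "(N+1)^p * N^(k-p) \<le> (N^p + 3^p * N^(p-1)) * N^(k-p)" using pow_bound[OF N] by (intro mult_right_mono) auto
    also have "\<dots> = N^p * N^(k-p) + 3^p * (N^(p-1) * N^(k-p))" by (simp add: algebra_simps)
    also have "N^p * N^(k-p) = N^k" using p by (simp add: power_add[symmetric])
    also have "N^(p-1) * N^(k-p) = N^(k-1)" using p False by (simp add: power_add[symmetric])
    also have "3^p * N^(k-1) \<le> 3^k * N^(k-1)" using p by (intro mult_right_mono power_increasing) auto
    finally show ?thesis by simp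
  qed
  then have "m * ((N+1)^p * N^(k-p)) \<le> m * (N^k + 3^k * N^(k-1))" by (rule mult_left_mono) simp
  then show "m * (N+1)^p * N^(k-p) \<le> m * N^k + m * 3^k * N^(k-1)" by (simp add: algebra_simps)
qed

lemma prod_form:
  fixes c P :: "'a \<Rightarrow> nat"
  assumes T: "finite T" and Pk: "\<forall>t\<in>T. P t \<le> k"
  shows "(\<Prod>t\<in>T. (D * (m t * (N+1)^(P t) * N^(k - P t)))^(c t))
       = (\<Prod>t\<in>T. (D * m t)^(c t)) * (N+1)^(\<Sum>t\<in>T. P t * c t) * N^(k * (\<Sum>t\<in>T. c t) - (\<Sum>t\<in>T. P t * c t))"
proof -
  have "(\<Prod>t\<in>T. (D * (m t * (N+1)^(P t) * N^(k - P t)))^(c t))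
      = (\<Prod>t\<in>T. (D * m t)^(c t) * ((N+1)^(P t * c t) * N^((k - P t) * c t)))"
    by (intro prod.cong) (auto simp: power_mult_distrib mult_ac simp flip: power_mult)
  also have "\<dots> = (\<Prod>t\<in>T. (D * m t)^(c t)) * ((N+1)^(\<Sum>t\<in>T. P t * c t) * N^(\<Sum>t\<in>T. (k - P t) * c t))"
    by (simp add: prod.distrib power_sum)
  also have "(\<Sum>t\<in>T. (k - P t) * c t) = k * (\<Sum>t\<in>T. c t) - (\<Sum>t\<in>T. P t * c t)"
  proof -
    have "(\<Sum>t\<in>T. (k - P t) * c t) = (\<Sum>t\<in>T. k * c t - P t * c t)" by (simp add: diff_mult_distrib)
    also have "\<dots> = (\<Sum>t\<in>T. k * c t) - (\<Sum>t\<in>T. P t * c t)"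
      using Pk by (intro sum_subtractf_nat) (auto intro: mult_right_mono)
    finally show ?thesis by (simp add: sum_distrib_left)
  qed
  finally show ?thesis by (simp add: mult_ac)
qed

lemma exp_inj:
  assumes N: "(N::nat) \<ge> 1" and P: "P \<le> M" and Q: "Q \<le> M"
    and eq: "(N+1)^P * N^(M-P) = (N+1)^Q * N^(M-Q)"
  shows "P = Q"
proof -
  let ?x = "(real N + 1) / real N"
  have Np: "real N > 0" using N by simp
  have r: "real ((N+1)^X * N^(M-X)) = real N ^ M * ?x ^ X" if "X \<le> M" for X
  proof -
    have "real N ^ M = real N ^ X * real N ^ (M - X)" using that by (simp add: power_add[symmetric])
    then show ?thesis using Np by (simp add: power_divide field_simps)
  qed
  have "real N ^ M * ?x ^ P = real N ^ M * ?x ^ Q" using r[OF P] r[OF Q] eq by metis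
  then have "?x ^ P = ?x ^ Q" using Np by simp
  moreover have "?x > 1" using Np by (simp add: field_simps)
  ultimately show ?thesis using power_inject_exp by blast
qed


lemma hom_self_pos: assumes "is_graph L" shows "hom L L > 0"
proof -
  have "restrict id (verts L) \<in> homs L L" using assms unfolding homs_def by (auto dest: is_graph_edge)
  then show ?thesis using hom_pos_iff assms by blast
qed

lemma realize':
  fixes T :: "graph set set" and R :: "graph set \<Rightarrow> graph"
  assumes T: "finite T" and simp: "\<forall>t\<in>T. simple_graph (R t)"
    and cn: "\<forall>t\<in>T. conn (R t)"
    and niso: "\<forall>s\<in>T. \<forall>t\<in>T. iso (R s) (R t) \<longrightarrow> s = t"
  shows "\<exists>D::nat. D > 0 \<and> (\<exists>m::graph set \<Rightarrow> nat. (\<forall>t\<in>T. m t > 0) \<and>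
     (\<forall>k::nat. k \<ge> 1 \<longrightarrow> (\<exists>N0::nat. \<forall>N \<ge> N0. N \<ge> 1 \<and> (\<forall>y::graph set \<Rightarrow> nat.
        (\<forall>t\<in>T. m t * N^k \<le> y t \<and> y t \<le> m t * N^k + m t * 3^k * N^(k-1)) \<longrightarrow>
        (\<exists>Y. simple_graph Y \<and> (\<forall>t\<in>T. hom (R t) Y = D * y t))))))"
proof (rule realize)
  show "finite T" by (rule T)
  show "\<And>t. t \<in> T \<Longrightarrow> simple_graph (R t)" using simp by blast
  show "\<And>t. t \<in> T \<Longrightarrow> conn (R t)" using cn by blast
  show "\<And>s t. s \<in> T \<Longrightarrow> t \<in> T \<Longrightarrow> iso (R s) (R t) \<Longrightarrow> s = t" using niso by blast
qed

lemma cond2_imp_closed: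
  assumes simple: "\<forall>F\<in>\<F>. simple_graph F" and prof: "ess_profinite \<F>"
    and c2: "\<forall>K. is_graph K \<longrightarrow> in_span_on (Gamma_class (restrict_to \<F> K \<union> {K})) (comp_vec ` restrict_to \<F> K) (comp_vec K) \<longrightarrow> K \<in> \<F>"
  shows "hd_closed \<F>"
proof -
  have sub1: "\<F> \<subseteq> hd_cl \<F>" using simple unfolding hd_cl_def hom_equiv_def by blast
  have sub2: "L \<in> \<F>" if L: "L \<in> hd_cl \<F>" for L
  proof (rule ccontr)
    assume notin: "L \<notin> \<F>"
    have Ls: "simple_graph L" using L hd_cl_def by blast
    have Lg: "is_graph L" using Ls simple_graph_def by blast
    let ?FL = "restrict_to \<F> L"
    let ?T = "Gamma_class (?FL \<union> {L})"
    have nspan: "\<not> in_span_on ?T (comp_vec ` ?FL) (comp_vec L)" using c2 Lg notin by blast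
    have Tfin: "finite ?T" using Gamma_class_fin[OF prof Lg] .
    have FLs: "F \<in> ?FL \<Longrightarrow> simple_graph F" for F using simple restrict_toD by blast
    have FLg: "F \<in> ?FL \<Longrightarrow> is_graph F" for F using FLs simple_graph_def by blast
    have GF: "F \<in> ?FL \<Longrightarrow> Gamma F \<subseteq> ?T" for F unfolding Gamma_class_def by auto
    have GL: "Gamma L \<subseteq> ?T" unfolding Gamma_class_def by auto
    have Tinfo: "\<exists>X S. simple_graph X \<and> S \<in> component_sets X \<and> t = iso_type (induced X S) \<and>
        iso (rep t) (induced X S) \<and> is_graph (rep t) \<and> conn (rep t)" if t: "t \<in> ?T" for t
    proof -
      obtain X where X: "X \<in> ?FL \<union> {L}" "t \<in> Gamma X" using t unfolding Gamma_class_def by blast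
      have Xs: "simple_graph X" using X(1) FLs Ls by blast
      then have "is_graph X" using simple_graph_def by blast
      then show ?thesis using Gamma_rep[OF X(2)] Xs by blast
    qed
    have Rs: "simple_graph (rep t)" if t: "t \<in> ?T" for t
    proof -
      obtain X S where XS: "simple_graph X" "S \<in> component_sets X" "iso (rep t) (induced X S)" "is_graph (rep t)"
        using Tinfo[OF t] by blast
      have "simple_graph (induced X S)" using induced_simple[OF XS(1)] cs_sub[OF XS(2)] XS(1) simple_graph_def by blast
      then show ?thesis using simple_iso XS by blast
    qed
    have Rc: "conn (rep t)" if t: "t \<in> ?T" for t using Tinfo[OF t] by blast
    have Rn: "s = t" if s: "s \<in> ?T" and t: "t \<in> ?T" and i: "iso (rep s) (rep t)" for s t
    proof -
      obtain X S where XS: "s = iso_type (induced X S)" "iso (rep s) (induced X S)"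
        using Tinfo[OF s] by blast
      obtain X' S' where XS': "t = iso_type (induced X' S')" "iso (rep t) (induced X' S')"
        using Tinfo[OF t] by blast
      have "iso (induced X S) (induced X' S')"
        using iso_trans[OF iso_sym[OF XS(2)] iso_trans[OF i XS'(2)]] .
      then show ?thesis using XS(1) XS'(1) iso_type_eq by simp
    qed
    define vq where "vq F = ((\<lambda>t. if t \<in> ?T then of_nat (cv F t) else 0) :: graph set \<Rightarrow> rat)" for F
    have VT: "\<forall>v\<in>vq ` ?FL. \<forall>x. x \<notin> ?T \<longrightarrow> v x = 0" unfolding vq_def by auto
    have uT: "\<forall>x. x \<notin> ?T \<longrightarrow> vq L x = 0" unfolding vq_def by auto
    have "\<exists>a::graph set \<Rightarrow> rat. (\<forall>F\<in>?FL. (\<Sum>t\<in>?T. a t * of_nat (cv F t)) = 0) \<and> (\<Sum>t\<in>?T. a t * of_nat (cv L t)) \<noteq> 0"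
    proof -
      from separate[OF Tfin VT uT] show ?thesis
      proof
        assume "\<exists>S c. finite S \<and> S \<subseteq> vq ` ?FL \<and> (\<forall>x. vq L x = (\<Sum>w\<in>S. c w * w x))"
        then obtain S c where S: "finite S" "S \<subseteq> vq ` ?FL" and eq: "\<forall>x. vq L x = (\<Sum>w\<in>S. c w * w x)" by blast
        define Fw where "Fw w = (SOME F. F \<in> ?FL \<and> vq F = w)" for w
        have Fw: "Fw w \<in> ?FL \<and> vq (Fw w) = w" if "w \<in> S" for w
        proof -
          have "\<exists>F. F \<in> ?FL \<and> vq F = w" using S(2) that by blast
          then show ?thesis unfolding Fw_def by (rule someI_ex)
        qed
        define \<phi> where "\<phi> w = comp_vec (Fw w)" for w
        define c' where "c' z = (\<Sum>w\<in>{w. w \<in> S \<and> \<phi> w = z}. real_of_rat (c w))" for z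
        have "\<forall>t\<in>?T. comp_vec L t = (\<Sum>z\<in>\<phi> ` S. c' z * z t)"
        proof
          fix t assume t: "t \<in> ?T"
          have "comp_vec L t = real_of_rat (vq L t)" using t unfolding vq_def comp_vec_cv by simp
          also have "\<dots> = real_of_rat (\<Sum>w\<in>S. c w * w t)" using eq by simp
          also have "\<dots> = (\<Sum>w\<in>S. real_of_rat (c w) * real_of_rat (w t))" by (simp add: of_rat_sum of_rat_mult)
          also have "\<dots> = (\<Sum>w\<in>S. real_of_rat (c w) * \<phi> w t)"
          proof (rule sum.cong[OF refl])
            fix w assume w: "w \<in> S"
            have "w t = vq (Fw w) t" using Fw[OF w] by simp
            then have "real_of_rat (w t) = \<phi> w t" using t unfolding vq_def \<phi>_def comp_vec_cv by simp
            then show "real_of_rat (c w) * real_of_rat (w t) = real_of_rat (c w) * \<phi> w t" by simp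
          qed
          also have "\<dots> = (\<Sum>z\<in>\<phi> ` S. \<Sum>w\<in>{w. w \<in> S \<and> \<phi> w = z}. real_of_rat (c w) * \<phi> w t)"
            by (rule sum.image_gen[OF S(1)])
          also have "\<dots> = (\<Sum>z\<in>\<phi> ` S. c' z * z t)"
          proof (rule sum.cong[OF refl])
            fix z assume "z \<in> \<phi> ` S"
            have "(\<Sum>w\<in>{w. w \<in> S \<and> \<phi> w = z}. real_of_rat (c w) * \<phi> w t) = (\<Sum>w\<in>{w. w \<in> S \<and> \<phi> w = z}. real_of_rat (c w) * z t)"
              by (rule sum.cong) auto
            also have "\<dots> = c' z * z t" unfolding c'_def by (simp add: sum_distrib_right)
            finally show "(\<Sum>w\<in>{w. w \<in> S \<and> \<phi> w = z}. real_of_rat (c w) * \<phi> w t) = c' z * z t" .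
          qed
          finally show "comp_vec L t = (\<Sum>z\<in>\<phi> ` S. c' z * z t)" .
        qed
        moreover have "\<phi> ` S \<subseteq> comp_vec ` ?FL" unfolding \<phi>_def using Fw by blast
        ultimately have "in_span_on ?T (comp_vec ` ?FL) (comp_vec L)"
          unfolding in_span_on_def using S(1) by blast
        then show ?thesis using nspan by blast
      next
        assume "\<exists>a. (\<forall>v\<in>vq ` ?FL. (\<Sum>t\<in>?T. a t * v t) = 0) \<and> (\<Sum>t\<in>?T. a t * vq L t) \<noteq> 0"
        then obtain a where a0: "\<forall>v\<in>vq ` ?FL. (\<Sum>t\<in>?T. a t * v t) = 0" and a1: "(\<Sum>t\<in>?T. a t * vq L t) \<noteq> 0" by blast
        have cvq: "(\<Sum>t\<in>?T. a t * vq F t) = (\<Sum>t\<in>?T. a t * of_nat (cv F t))" for F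
          unfolding vq_def by (rule sum.cong) auto
        have "\<forall>F\<in>?FL. (\<Sum>t\<in>?T. a t * of_nat (cv F t)) = 0"
        proof
          fix F assume F: "F \<in> ?FL"
          have m: "vq F \<in> vq ` ?FL" using F by blast
          have "(\<Sum>t\<in>?T. a t * vq F t) = 0" by (rule bspec[OF a0 m])
          then show "(\<Sum>t\<in>?T. a t * of_nat (cv F t)) = 0" using cvq by simp
        qed
        moreover have "(\<Sum>t\<in>?T. a t * of_nat (cv L t)) \<noteq> 0" using a1 cvq by simp
        ultimately show ?thesis by blast
      qed
    qed
    then obtain a :: "graph set \<Rightarrow> rat" where a0: "\<forall>F\<in>?FL. (\<Sum>t\<in>?T. a t * of_nat (cv F t)) = 0"
      and a1: "(\<Sum>t\<in>?T. a t * of_nat (cv L t)) \<noteq> 0" by blast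
    obtain D1 where D1: "D1 > 0" "\<forall>t\<in>?T. \<exists>z::int. of_nat D1 * a t = of_int z"
      using common_denom[OF Tfin, of a] by blast
    define b where "b t = (SOME z::int. of_nat D1 * a t = of_int z)" for t
    have bq: "of_nat D1 * a t = of_int (b t)" if "t \<in> ?T" for t
    proof -
      have "\<exists>z::int. of_nat D1 * a t = of_int z" using D1(2) that by blast
      then show ?thesis unfolding b_def by (rule someI_ex)
    qed
    have bsum: "(of_int (\<Sum>t\<in>?T. b t * int (cv F t)) :: rat) = of_nat D1 * (\<Sum>t\<in>?T. a t * of_nat (cv F t))" for F
    proof -
      have "(of_int (\<Sum>t\<in>?T. b t * int (cv F t)) :: rat) = (\<Sum>t\<in>?T. of_int (b t) * of_nat (cv F t))" by simp
      also have "\<dots> = (\<Sum>t\<in>?T. of_nat D1 * a t * of_nat (cv F t))" using bq by (intro sum.cong) auto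
      also have "\<dots> = of_nat D1 * (\<Sum>t\<in>?T. a t * of_nat (cv F t))" by (simp add: sum_distrib_left mult.assoc)
      finally show ?thesis .
    qed
    have bF: "(\<Sum>t\<in>?T. b t * int (cv F t)) = 0" if F: "F \<in> ?FL" for F
    proof -
      have "(of_int (\<Sum>t\<in>?T. b t * int (cv F t)) :: rat) = 0" using bsum a0 F by simp
      then show ?thesis by (simp only: of_int_eq_0_iff)
    qed
    have bL: "(\<Sum>t\<in>?T. b t * int (cv L t)) \<noteq> 0"
    proof
      assume "(\<Sum>t\<in>?T. b t * int (cv L t)) = 0"
      then have "(of_int (\<Sum>t\<in>?T. b t * int (cv L t)) :: rat) = 0" by simp
      then show False using bsum[of L] a1 D1(1) by simp
    qed
    define k where "k = 1 + (\<Sum>t\<in>?T. nat \<bar>b t\<bar>)"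
    define p where "p t = nat (b t)" for t
    define q where "q t = nat (- b t)" for t
    have k1: "k \<ge> 1" unfolding k_def by simp
    have absk: "nat \<bar>b t\<bar> \<le> k" if "t \<in> ?T" for t
    proof -
      have "nat \<bar>b t\<bar> \<le> (\<Sum>t\<in>?T. nat \<bar>b t\<bar>)" using Tfin that by (intro member_le_sum) auto
      then show ?thesis unfolding k_def by simp
    qed
    have pk: "\<forall>t\<in>?T. p t \<le> k" using absk unfolding p_def by (metis abs_ge_self le_trans nat_mono)
    have qk: "\<forall>t\<in>?T. q t \<le> k" using absk unfolding q_def by (metis abs_ge_minus_self le_trans nat_mono)
    have bpq: "b t = int (p t) - int (q t)" for t unfolding p_def q_def by linarith
    have Rs': "\<forall>t\<in>?T. simple_graph (rep t)" using Rs by blast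
    have Rc': "\<forall>t\<in>?T. conn (rep t)" using Rc by blast
    have Rn': "\<forall>s\<in>?T. \<forall>t\<in>?T. iso (rep s) (rep t) \<longrightarrow> s = t" using Rn by blast
    obtain D m where D: "D > 0" and mpos: "\<forall>t\<in>?T. m t > 0" and
      rz: "\<forall>k::nat. k \<ge> 1 \<longrightarrow> (\<exists>N0::nat. \<forall>N \<ge> N0. N \<ge> 1 \<and> (\<forall>y::graph set \<Rightarrow> nat.
        (\<forall>t\<in>?T. m t * N^k \<le> y t \<and> y t \<le> m t * N^k + m t * 3^k * N^(k-1)) \<longrightarrow>
        (\<exists>Y. simple_graph Y \<and> (\<forall>t\<in>?T. hom (rep t) Y = D * y t))))"
      using realize'[where R=rep, OF Tfin Rs' Rc' Rn'] by (elim exE conjE) (rule that)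
    obtain N where N1: "N \<ge> 1" and NY: "\<forall>y::graph set \<Rightarrow> nat.
        (\<forall>t\<in>?T. m t * N^k \<le> y t \<and> y t \<le> m t * N^k + m t * 3^k * N^(k-1)) \<longrightarrow>
        (\<exists>Y. simple_graph Y \<and> (\<forall>t\<in>?T. hom (rep t) Y = D * y t))"
    proof -
      have ex: "\<exists>N0::nat. \<forall>N \<ge> N0. N \<ge> 1 \<and> (\<forall>y::graph set \<Rightarrow> nat.
        (\<forall>t\<in>?T. m t * N^k \<le> y t \<and> y t \<le> m t * N^k + m t * 3^k * N^(k-1)) \<longrightarrow>
        (\<exists>Y. simple_graph Y \<and> (\<forall>t\<in>?T. hom (rep t) Y = D * y t)))"
        using mp[OF spec[OF rz, of k] k1] .
      then obtain N0 where N0: "\<forall>N \<ge> N0. N \<ge> 1 \<and> (\<forall>y::graph set \<Rightarrow> nat.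
        (\<forall>t\<in>?T. m t * N^k \<le> y t \<and> y t \<le> m t * N^k + m t * 3^k * N^(k-1)) \<longrightarrow>
        (\<exists>Y. simple_graph Y \<and> (\<forall>t\<in>?T. hom (rep t) Y = D * y t)))" by (erule exE)
      have "N0 \<ge> 1 \<and> (\<forall>y::graph set \<Rightarrow> nat.
        (\<forall>t\<in>?T. m t * N0^k \<le> y t \<and> y t \<le> m t * N0^k + m t * 3^k * N0^(k-1)) \<longrightarrow>
        (\<exists>Y. simple_graph Y \<and> (\<forall>t\<in>?T. hom (rep t) Y = D * y t)))"
        using spec[OF N0, of N0] by simp
      then show ?thesis using that by blast
    qed
    have mk: "\<exists>Y. simple_graph Y \<and> (\<forall>t\<in>?T. hom (rep t) Y = D * (m t * (N+1)^(P t) * N^(k - P t)))"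
      if P: "\<forall>t\<in>?T. P t \<le> k" for P
    proof -
      have "\<forall>t\<in>?T. m t * N^k \<le> m t * (N+1)^(P t) * N^(k - P t) \<and> m t * (N+1)^(P t) * N^(k - P t) \<le> m t * N^k + m t * 3^k * N^(k-1)"
        using y_bounds[OF N1 k1] P by blast
      from spec[OF NY, of "\<lambda>t. m t * (N+1)^(P t) * N^(k - P t)"] this show ?thesis by simp
    qed
    obtain Y where Ys: "simple_graph Y" and Yh: "\<forall>t\<in>?T. hom (rep t) Y = D * (m t * (N+1)^(p t) * N^(k - p t))"
      using mk[OF pk] by blast
    obtain Z where Zs: "simple_graph Z" and Zh: "\<forall>t\<in>?T. hom (rep t) Z = D * (m t * (N+1)^(q t) * N^(k - q t))"
      using mk[OF qk] by blast
    have Yg: "is_graph Y" and Zg: "is_graph Z" using Ys Zs simple_graph_def by auto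
    have homX: "hom X W = (\<Prod>t\<in>?T. (D * m t)^(cv X t)) * (N+1)^(\<Sum>t\<in>?T. P t * cv X t) * N^(k * (\<Sum>t\<in>?T. cv X t) - (\<Sum>t\<in>?T. P t * cv X t))"
      if X: "is_graph X" "Gamma X \<subseteq> ?T" and W: "is_graph W" and P: "\<forall>t\<in>?T. P t \<le> k"
        and Wh: "\<forall>t\<in>?T. hom (rep t) W = D * (m t * (N+1)^(P t) * N^(k - P t))" for X W P
    proof -
      have "hom X W = (\<Prod>t\<in>?T. hom (rep t) W ^ cv X t)" using hom_grouped[OF X(1) W Tfin X(2)] .
      also have "\<dots> = (\<Prod>t\<in>?T. (D * (m t * (N+1)^(P t) * N^(k - P t)))^(cv X t))"
        using Wh by (intro prod.cong) auto
      also have "\<dots> = (\<Prod>t\<in>?T. (D * m t)^(cv X t)) * (N+1)^(\<Sum>t\<in>?T. P t * cv X t) * N^(k * (\<Sum>t\<in>?T. cv X t) - (\<Sum>t\<in>?T. P t * cv X t))"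
        by (rule prod_form[OF Tfin P])
      finally show ?thesis .
    qed
    have pqsum: "(int (\<Sum>t\<in>?T. p t * cv X t) - int (\<Sum>t\<in>?T. q t * cv X t)) = (\<Sum>t\<in>?T. b t * int (cv X t))" for X
      by (simp add: of_nat_sum sum_subtractf[symmetric] bpq algebra_simps)
    have eqv: "hom_equiv \<F> (prodG Y L) (prodG Z L)"
      unfolding hom_equiv_def
    proof
      fix F assume F: "F \<in> \<F>"
      have Fg: "is_graph F" using simple F simple_graph_def by blast
      show "hom F (prodG Y L) = hom F (prodG Z L)"
      proof (cases "hom F L > 0")
        case False then show ?thesis using hom_prodG[OF Fg Yg Lg] hom_prodG[OF Fg Zg Lg] by simp
      next
        case True
        then have FL: "F \<in> ?FL" using F unfolding restrict_to_def by blast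
        have "int (\<Sum>t\<in>?T. p t * cv F t) - int (\<Sum>t\<in>?T. q t * cv F t) = 0"
          by (subst pqsum) (rule bF[OF FL])
        then have "(\<Sum>t\<in>?T. p t * cv F t) = (\<Sum>t\<in>?T. q t * cv F t)" by (simp only: right_minus_eq of_nat_eq_iff)
        then have "hom F Y = hom F Z"
          using homX[OF Fg GF[OF FL] Yg pk Yh] homX[OF Fg GF[OF FL] Zg qk Zh] by simp
        then show ?thesis using hom_prodG[OF Fg Yg Lg] hom_prodG[OF Fg Zg Lg] by simp
      qed
    qed
    have neq: "hom L Y \<noteq> hom L Z"
    proof
      assume e: "hom L Y = hom L Z"
      let ?W = "(\<Prod>t\<in>?T. (D * m t)^(cv L t))"
      let ?M = "k * (\<Sum>t\<in>?T. cv L t)"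
      let ?P = "\<Sum>t\<in>?T. p t * cv L t"
      let ?Q = "\<Sum>t\<in>?T. q t * cv L t"
      have W0: "?W > 0" using D mpos by (simp add: prod_pos)
      have "?W * ((N+1)^?P * N^(?M - ?P)) = ?W * ((N+1)^?Q * N^(?M - ?Q))"
        using e homX[OF Lg GL Yg pk Yh] homX[OF Lg GL Zg qk Zh] by (simp add: mult.assoc)
      then have e2: "(N+1)^?P * N^(?M - ?P) = (N+1)^?Q * N^(?M - ?Q)" using W0 by simp
      have PM: "?P \<le> ?M" unfolding sum_distrib_left using pk by (intro sum_mono) (auto simp: mult.commute)
      have QM: "?Q \<le> ?M" unfolding sum_distrib_left using qk by (intro sum_mono) (auto simp: mult.commute)
      have "?P = ?Q" using exp_inj[OF N1 PM QM e2] .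
      then have "int ?P - int ?Q = 0" by simp
      then show False using pqsum[of L] bL by (simp only:)
    qed
    have "hom L (prodG Y L) \<noteq> hom L (prodG Z L)"
      using hom_prodG[OF Lg Yg Lg] hom_prodG[OF Lg Zg Lg] hom_self_pos[OF Lg] neq by simp
    moreover have "simple_graph (prodG Y L)" "simple_graph (prodG Z L)"
      using prodG_simple Ys Zs Lg by auto
    ultimately show False using L eqv unfolding hd_cl_def by blast
  qed
  show ?thesis unfolding hd_closed_def using sub1 sub2 by blast
qed


lemma prof_restrict:
  assumes prof: "ess_profinite \<F>"
  shows "ess_profinite (restrict_to \<F> K)"
  unfolding ess_profinite_def ess_finite_def
proof (intro allI impI)
  fix K' assume K': "is_graph K'"
  have "finite (Gamma_class (restrict_to \<F> K'))" using prof K' unfolding ess_profinite_def ess_finite_def by blast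
  moreover have "Gamma_class (restrict_to (restrict_to \<F> K) K') \<subseteq> Gamma_class (restrict_to \<F> K')"
    unfolding Gamma_class_def restrict_to_def by auto
  ultimately show "finite (Gamma_class (restrict_to (restrict_to \<F> K) K'))" by (rule finite_subset[rotated])
qed

lemma closed_imp_c2:
  assumes simple: "\<forall>F\<in>\<F>. simple_graph F" and prof: "ess_profinite \<F>" and cl: "hd_closed \<F>"
  shows "\<forall>K. is_graph K \<longrightarrow> in_span_on (Gamma_class (restrict_to \<F> K \<union> {K})) (comp_vec ` restrict_to \<F> K) (comp_vec K) \<longrightarrow> K \<in> \<F>"
  using span_imp_cl[OF simple prof] cl unfolding hd_closed_def by blast

lemma closed_imp_c3:
  assumes simple: "\<forall>F\<in>\<F>. simple_graph F" and prof: "ess_profinite \<F>" and cl: "hd_closed \<F>"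
    and K: "is_graph K"
  shows "hd_closed (restrict_to \<F> K)"
proof (rule cond2_imp_closed)
  show "\<forall>F\<in>restrict_to \<F> K. simple_graph F" using simple restrict_toD by blast
  show "ess_profinite (restrict_to \<F> K)" using prof_restrict[OF prof] .
  have c2: "\<forall>K. is_graph K \<longrightarrow> in_span_on (Gamma_class (restrict_to \<F> K \<union> {K})) (comp_vec ` restrict_to \<F> K) (comp_vec K) \<longrightarrow> K \<in> \<F>"
    using closed_imp_c2[OF simple prof cl] .
  show "\<forall>K'. is_graph K' \<longrightarrow> in_span_on (Gamma_class (restrict_to (restrict_to \<F> K) K' \<union> {K'})) (comp_vec ` restrict_to (restrict_to \<F> K) K') (comp_vec K') \<longrightarrow> K' \<in> restrict_to \<F> K"
  proof (intro allI impI)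
    fix K' assume K': "is_graph K'"
      and sp: "in_span_on (Gamma_class (restrict_to (restrict_to \<F> K) K' \<union> {K'})) (comp_vec ` restrict_to (restrict_to \<F> K) K') (comp_vec K')"
    let ?R = "restrict_to (restrict_to \<F> K) K'"
    let ?T1 = "Gamma_class (?R \<union> {K'})"
    obtain S c where S: "finite S" "S \<subseteq> comp_vec ` ?R" and eq: "\<forall>t\<in>?T1. comp_vec K' t = (\<Sum>w\<in>S. c w * w t)"
      using sp unfolding in_span_on_def by blast
    have RF: "F \<in> ?R \<Longrightarrow> F \<in> \<F> \<and> hom F K > 0 \<and> hom F K' > 0" for F using restrict_toD by blast
    have RFg: "F \<in> ?R \<Longrightarrow> is_graph F" for F using RF simple simple_graph_def by blast
    have GR: "F \<in> ?R \<Longrightarrow> Gamma F \<subseteq> ?T1" for F unfolding Gamma_class_def by auto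
    have GK': "Gamma K' \<subseteq> ?T1" unfolding Gamma_class_def by auto
    have "in_span_on (Gamma_class (restrict_to \<F> K' \<union> {K'})) (comp_vec ` restrict_to \<F> K') (comp_vec K')"
      unfolding in_span_on_def
    proof (intro exI conjI)
      show "finite S" by (rule S(1))
      show "S \<subseteq> comp_vec ` restrict_to \<F> K'" using S(2) unfolding restrict_to_def by auto
      show "\<forall>t\<in>Gamma_class (restrict_to \<F> K' \<union> {K'}). comp_vec K' t = (\<Sum>w\<in>S. c w * w t)"
      proof
        fix t assume "t \<in> Gamma_class (restrict_to \<F> K' \<union> {K'})"
        show "comp_vec K' t = (\<Sum>w\<in>S. c w * w t)"
        proof (cases "t \<in> ?T1")
          case True then show ?thesis using eq by blast
        next
          case False
          have "cv K' t = 0" using False GK' cv_pos_Gamma by blast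
          moreover have "w t = 0" if w: "w \<in> S" for w
          proof -
            obtain F where F: "F \<in> ?R" "w = comp_vec F" using S(2) w by blast
            have "cv F t = 0" using False GR[OF F(1)] cv_pos_Gamma by blast
            then show ?thesis using F(2) comp_vec_cv by simp
          qed
          then have "(\<Sum>w\<in>S. c w * w t) = 0" by (intro sum.neutral ballI) simp
          with \<open>cv K' t = 0\<close> show ?thesis using comp_vec_cv by simp
        qed
      qed
    qed
    then have inF: "K' \<in> \<F>" using c2 K' by blast
    have "hom K' K > 0"
    proof -
      have "hom K' K = (\<Prod>S\<in>component_sets K'. hom (induced K' S) K)" using hom_product[OF K' K] .
      moreover have "hom (induced K' S') K > 0" if S': "S' \<in> component_sets K'" for S'
      proof -
        let ?t = "iso_type (induced K' S')"
        have tG: "?t \<in> Gamma K'" unfolding Gamma_def components_def using S' by blast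
        have "cv K' ?t > 0" unfolding cv_def using S' cv_finite[OF K'] by (auto simp: card_gt_0_iff)
        then have "comp_vec K' ?t \<noteq> 0" using comp_vec_cv by simp
        moreover have "?t \<in> ?T1" using GK' tG by blast
        moreover have "comp_vec K' ?t = (\<Sum>w\<in>S. c w * w ?t)" using eq \<open>?t \<in> ?T1\<close> by blast
        ultimately have ne: "(\<Sum>w\<in>S. c w * w ?t) \<noteq> 0" by simp
        have "\<exists>w\<in>S. c w * w ?t \<noteq> 0"
        proof (rule ccontr)
          assume "\<not> (\<exists>w\<in>S. c w * w ?t \<noteq> 0)"
          then have "\<forall>w\<in>S. c w * w ?t = 0" by blast
          then have "(\<Sum>w\<in>S. c w * w ?t) = 0" by (rule sum.neutral)
          then show False using ne by simp
        qed
        then obtain w where w: "w \<in> S" "w ?t \<noteq> 0" by auto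
        obtain F where F: "F \<in> ?R" "w = comp_vec F" using S(2) w by blast
        have "cv F ?t \<noteq> 0" using w(2) F(2) comp_vec_cv by simp
        then have tF: "?t \<in> Gamma F" using cv_pos_Gamma by blast
        have Fg: "is_graph F" using RFg[OF F(1)] .
        have "hom (rep ?t) F > 0" using Gamma_hom_pos[OF tF Fg] .
        moreover have "hom F K > 0" using RF[OF F(1)] by blast
        moreover obtain S0 where "is_graph (rep ?t)" using Gamma_rep[OF tF Fg] by blast
        ultimately have pos: "hom (rep ?t) K > 0" using hom_comp_pos[OF _ Fg K] by blast
        have "rep ?t \<in> ?t" using rep_comp[OF S' K'] by blast
        then have "iso (rep ?t) (induced K' S')" "is_graph (rep ?t)" using iso_type_mem by blast+
        then have "hom (rep ?t) K = hom (induced K' S') K" using hom_iso cs_graph[OF S' K'] K by blast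
        then show ?thesis using pos by simp
      qed
      ultimately show ?thesis by (simp add: prod_pos)
    qed
    then show "K' \<in> restrict_to \<F> K" using inF unfolding restrict_to_def by blast
  qed
qed

lemma restrict_loop:
  assumes simple: "\<forall>F\<in>\<F>. simple_graph F"
  shows "restrict_to \<F> ({0}, {(0,0)}) = \<F>"
proof -
  have "hom F ({0}, {(0,0)}) > 0" if F: "F \<in> \<F>" for F
  proof -
    have Fg: "is_graph F" using simple F simple_graph_def by blast
    have Kg: "is_graph ({0}, {(0,0)})" unfolding is_graph_def verts_def edges_def sym_def by simp
    have v0: "verts ({0::nat}, {(0::nat,0::nat)}) = {0}" and e0: "edges ({0::nat}, {(0::nat,0::nat)}) = {(0,0)}"
      unfolding verts_def edges_def by simp_all
    have "(\<lambda>v\<in>verts F. 0) \<in> homs F ({0}, {(0,0)})" unfolding homs_def v0 e0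
      using Fg by (auto dest: is_graph_edge)
    then show ?thesis using hom_pos_iff Fg Kg by blast
  qed
  then show ?thesis unfolding restrict_to_def by blast
qed

theorem theorem27:
  fixes \<F> :: "graph set"
  assumes simple: "\<forall>F\<in>\<F>. simple_graph F"
    and closed_iso: "iso_closed \<F>"
    and prof: "ess_profinite \<F>"
  shows "(hd_closed \<F> \<longleftrightarrow>
          (\<forall>K. is_graph K \<longrightarrow>
             in_span_on (Gamma_class (restrict_to \<F> K \<union> {K}))
               (comp_vec ` restrict_to \<F> K) (comp_vec K) \<longrightarrow> K \<in> \<F>))
       \<and> (hd_closed \<F> \<longleftrightarrow> (\<forall>K. is_graph K \<longrightarrow> hd_closed (restrict_to \<F> K)))"
proof (intro conjI iffI)
  assume "hd_closed \<F>"
  then show "\<forall>K. is_graph K \<longrightarrow> in_span_on (Gamma_class (restrict_to \<F> K \<union> {K})) (comp_vec ` restrict_to \<F> K) (comp_vec K) \<longrightarrow> K \<in> \<F>"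
    using closed_imp_c2[OF simple prof] by blast
next
  assume "\<forall>K. is_graph K \<longrightarrow> in_span_on (Gamma_class (restrict_to \<F> K \<union> {K})) (comp_vec ` restrict_to \<F> K) (comp_vec K) \<longrightarrow> K \<in> \<F>"
  then show "hd_closed \<F>" using cond2_imp_closed[OF simple prof] by blast
next
  assume "hd_closed \<F>"
  then show "\<forall>K. is_graph K \<longrightarrow> hd_closed (restrict_to \<F> K)"
    using closed_imp_c3[OF simple prof] by blast
next
  assume a: "\<forall>K. is_graph K \<longrightarrow> hd_closed (restrict_to \<F> K)"
  have Kg: "is_graph ({0}, {(0,0)})" unfolding is_graph_def verts_def edges_def sym_def by simp
  have "hd_closed (restrict_to \<F> ({0}, {(0,0)}))" using a Kg by blast
  then show "hd_closed \<F>" unfolding restrict_loop[OF simple] .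
qed

end
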